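(* Let $p\in\mathbb{N}^*$, $H_0,H_1$ real symmetric $p\times p$ matrices, and assume there is $K\in\{1,\dots,p\}$ with $\langle H_1\varphi_1,\varphi_K\rangle=0$ and $a^1_K:=\langle[H_1,[H_0,H_1]]\varphi_1,\varphi_K\rangle\neq0$. Then there exists $C>0$ such that for all $a\in(0,|a^1_K|/8)$ there exists $T^*>0$ such that for all $T\in(0,T^* )$ there exists $\eta>0$ such that for all real $u\in L^1(0,T)$ with $\|u_1\|_{L^\infty(0,T)}<\eta$, the solution of $iX'=H_0X-u(t)H_1X$, $X(0)=\varphi_1$, satisfies $$-\operatorname{sign}(a^1_K)\Im\langle X(T),\varphi_Ke^{-i\lambda_1T}\rangle\ge a\|u_1\|^2_{L^2(0,T)}-C\|(X-X_1)(T)\|^2.$$ In particular the system is not $W^{-1,\infty}$-STLC.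
   Context: $(\varphi_1,\dots,\varphi_p)$ is a real orthonormal basis of eigenvectors of $H_0$ with eigenvalues $\lambda_1,\dots,\lambda_p$; $\langle\cdot,\cdot\rangle$ is the Hermitian product on $\mathbb{C}^p$; $[M,N]=MN-NM$; $X_1(t)=\varphi_1e^{-i\lambda_1t}$; $u_1(t)=\int_0^tu$. *)

theory Defs
  imports "HOL-Analysis.Analysis"
begin

definition cvec :: "real^'n \<Rightarrow> complex^'n" where
  "cvec v = (\<chi> i. complex_of_real (v $ i))"

definition cmat :: "real^'n^'m \<Rightarrow> complex^'n^'m" where
  "cmat M = (\<chi> i j. complex_of_real (M $ i $ j))"

definition herm :: "complex^'n \<Rightarrow> complex^'n \<Rightarrow> complex" where
  "herm x y = (\<Sum>i\<in>UNIV. x $ i * cnj (y $ i))"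

definition comm :: "real^'n^'n \<Rightarrow> real^'n^'n \<Rightarrow> real^'n^'n" where
  "comm M N = M ** N - N ** M"

text \<open>X is the (Caratheodory, i.e. absolutely continuous) solution on [0,T] of
  i X' = H0 X - u(t) H1 X, X(0) = x0, written in integral form.\<close>
definition is_solution ::
  "real^'n^'n \<Rightarrow> real^'n^'n \<Rightarrow> (real \<Rightarrow> real) \<Rightarrow> complex^'n \<Rightarrow> real \<Rightarrow> (real \<Rightarrow> complex^'n) \<Rightarrow> bool" where
  "is_solution H0 H1 u x0 T X \<longleftrightarrow>
     continuous_on {0..T} X \<and>
     (\<forall>t\<in>{0..T}.
        ((\<lambda>s. (- \<i>) *s (cmat H0 *v X s - complex_of_real (u s) *s (cmat H1 *v X s)))
           has_integral (X t - x0)) {0..t})"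

end

theory Submission
  imports Defs
begin

typedef (overloaded) ('a::euclidean_space) endo = "UNIV :: ('a \<Rightarrow>\<^sub>L 'a) set"
  morphisms rep abs by auto

setup_lifting type_definition_endo

instantiation endo :: (euclidean_space) real_normed_vector
begin
lift_definition norm_endo :: "'a endo \<Rightarrow> real" is norm .
lift_definition minus_endo :: "'a endo \<Rightarrow> 'a endo \<Rightarrow> 'a endo" is "(-)" .
lift_definition plus_endo :: "'a endo \<Rightarrow> 'a endo \<Rightarrow> 'a endo" is "(+)" .
lift_definition uminus_endo :: "'a endo \<Rightarrow> 'a endo" is "uminus" .
lift_definition zero_endo :: "'a endo" is "0" .
lift_definition scaleR_endo :: "real \<Rightarrow> 'a endo \<Rightarrow> 'a endo" is "scaleR" .
definition dist_endo :: "'a endo \<Rightarrow> 'a endo \<Rightarrow> real" where "dist_endo a b = norm (a - b)"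
definition sgn_endo :: "'a endo \<Rightarrow> 'a endo" where "sgn_endo x = scaleR (inverse (norm x)) x"
definition uniformity_endo :: "('a endo \<times> 'a endo) filter" where
  "uniformity_endo = (INF e\<in>{0 <..}. principal {(x, y). dist x y < e})"
definition open_endo :: "'a endo set \<Rightarrow> bool" where
  "open_endo S = (\<forall>x\<in>S. \<forall>\<^sub>F (x', y) in uniformity. x' = x \<longrightarrow> y \<in> S)"
instance
  apply standard
  unfolding dist_endo_def open_endo_def sgn_endo_def uniformity_endo_def
  apply (rule refl | (transfer, force simp: norm_triangle_ineq algebra_simps))+
  done
end

instantiation endo :: (euclidean_space) real_normed_algebra_1
begin
lift_definition times_endo :: "'a endo \<Rightarrow> 'a endo \<Rightarrow> 'a endo" is "(o\<^sub>L)" .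
lift_definition one_endo :: "'a endo" is "id_blinfun" .
instance
proof
  show "(0::'a endo) \<noteq> 1"
  proof transfer
    obtain b :: 'a where "b \<in> Basis" using nonempty_Basis by blast
    then have "b \<noteq> 0" by auto
    then show "(0::'a \<Rightarrow>\<^sub>L 'a) \<noteq> id_blinfun"
      by (metis blinfun_apply_id_blinfun blinfun.zero_left)
  qed
qed (transfer; auto intro!: blinfun_eqI simp: blinfun.bilinear_simps norm_blinfun_compose)+
end

lemma norm_rep[simp]: "norm (rep x) = norm x" by transfer simp
lemma rep_diff: "rep (x - y) = rep x - rep y" by transfer simp

instance endo :: (euclidean_space) banach
proof
  fix X :: "nat \<Rightarrow> 'a endo"
  assume C: "Cauchy X"
  have "Cauchy (\<lambda>n. rep (X n))"
  proof (rule metric_CauchyI)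
    fix e :: real assume "0 < e"
    then obtain M where "\<forall>m\<ge>M. \<forall>n\<ge>M. dist (X m) (X n) < e" using C metric_CauchyD by blast
    then show "\<exists>M. \<forall>m\<ge>M. \<forall>n\<ge>M. dist (rep (X m)) (rep (X n)) < e"
      by (metis dist_norm dist_endo_def norm_rep rep_diff)
  qed
  then obtain L where L: "(\<lambda>n. rep (X n)) \<longlonglongrightarrow> L" using Cauchy_convergent_iff convergent_def by blast
  have "X \<longlonglongrightarrow> abs L"
  proof (rule LIMSEQ_I)
    fix r :: real assume "0 < r"
    then obtain N where N: "\<forall>n\<ge>N. norm (rep (X n) - L) < r" using L LIMSEQ_D by blast
    show "\<exists>no. \<forall>n\<ge>no. norm (X n - abs L) < r"
    proof (intro exI allI impI)
      fix n assume "N \<le> n"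
      then have "norm (rep (X n) - rep (abs L)) < r" using N by (simp add: abs_inverse)
      then show "norm (X n - abs L) < r" by (simp only: rep_diff[symmetric] norm_rep)
    qed
  qed
  then show "convergent X" by (auto simp: convergent_def)
qed


definition ap :: "'a::euclidean_space endo \<Rightarrow> 'a \<Rightarrow> 'a" where
  "ap S x = blinfun_apply (rep S) x"

definition mk :: "('a::euclidean_space \<Rightarrow> 'a) \<Rightarrow> 'a endo" where
  "mk f = abs (Blinfun f)"

lemma ap_mk: "bounded_linear f \<Longrightarrow> ap (mk f) x = f x"
  by (simp add: ap_def mk_def abs_inverse bounded_linear_Blinfun_apply)

lemma ap_mult: "ap (S * T) x = ap S (ap T x)"
  unfolding ap_def by transfer simp
lemma ap_one[simp]: "ap 1 x = x"
  unfolding ap_def by transfer simp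
lemma ap_zero[simp]: "ap 0 x = 0"
  unfolding ap_def by transfer simp
lemma ap_add_left: "ap (S + T) x = ap S x + ap T x"
  unfolding ap_def by transfer (simp add: blinfun.bilinear_simps)
lemma ap_diff_left: "ap (S - T) x = ap S x - ap T x"
  unfolding ap_def by transfer (simp add: blinfun.bilinear_simps)
lemma ap_minus_left: "ap (- S) x = - ap S x"
  unfolding ap_def by transfer (simp add: blinfun.bilinear_simps)
lemma ap_scaleR_left: "ap (r *\<^sub>R S) x = r *\<^sub>R ap S x"
  unfolding ap_def by transfer (simp add: blinfun.bilinear_simps)
lemma ap_norm: "norm (ap S x) \<le> norm S * norm x"
  unfolding ap_def by transfer (rule norm_blinfun)

lemma bounded_bilinear_ap: "bounded_bilinear ap"
proof
  fix a a' :: "'a endo" and b b' :: 'a and r :: real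
  show "ap (a + a') b = ap a b + ap a' b" by (rule ap_add_left)
  show "ap a (b + b') = ap a b + ap a b'" unfolding ap_def by (simp add: blinfun.bilinear_simps)
  show "ap (r *\<^sub>R a) b = r *\<^sub>R ap a b" by (rule ap_scaleR_left)
  show "ap a (r *\<^sub>R b) = r *\<^sub>R ap a b" unfolding ap_def by (simp add: blinfun.bilinear_simps)
  show "\<exists>K. \<forall>a b. norm (ap a b) \<le> norm a * norm b * K"
    by (rule exI[where x=1]) (simp add: ap_norm)
qed

interpretation ap: bounded_bilinear ap by (rule bounded_bilinear_ap)

lemma ap_add_right: "ap S (x + y) = ap S x + ap S y" by (rule ap.add_right)
lemma ap_diff_right: "ap S (x - y) = ap S x - ap S y" by (rule ap.diff_right)
lemma ap_minus_right: "ap S (- x) = - ap S x" by (rule ap.minus_right)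
lemma ap_scaleR_right: "ap S (r *\<^sub>R x) = r *\<^sub>R ap S x" by (rule ap.scaleR_right)
lemma ap_zero_right[simp]: "ap S 0 = 0" by (rule ap.zero_right)

lemma exp_deriv: "((\<lambda>t. exp (t *\<^sub>R S)) has_vector_derivative exp (t *\<^sub>R S) * S) (at t within X)"
  by (rule exp_scaleR_has_vector_derivative_right)

lemma exp_deriv': "((\<lambda>t. exp (t *\<^sub>R S)) has_vector_derivative S * exp (t *\<^sub>R S)) (at t within X)"
  using exp_scaleR_has_vector_derivative_right[of S t X] by (simp add: exp_times_scaleR_commute)

lemma exp_scaleR_add: "exp ((a + b) *\<^sub>R S) = exp (a *\<^sub>R S) * exp (b *\<^sub>R S)"
  by (simp add: scaleR_add_left exp_add_commuting[symmetric])

lemma exp_scaleR_inv: "exp (a *\<^sub>R S) * exp ((- a) *\<^sub>R S) = 1"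
  using exp_minus_inverse[of "a *\<^sub>R S"] by simp

lemma exp_scaleR_inv': "exp ((- a) *\<^sub>R S) * exp (a *\<^sub>R S) = 1"
  using exp_scaleR_inv[of "-a" S] by simp

definition skew :: "'a::euclidean_space endo \<Rightarrow> bool" where
  "skew S \<longleftrightarrow> (\<forall>x y. ap S x \<bullet> y = - (x \<bullet> ap S y))"

lemma skew_exp_inner:
  assumes "skew S"
  shows "ap (exp (t *\<^sub>R S)) x \<bullet> ap (exp (t *\<^sub>R S)) y = x \<bullet> y"
proof -
  define f where "f t = ap (exp (t *\<^sub>R S)) x \<bullet> ap (exp (t *\<^sub>R S)) y" for t
  have d: "((\<lambda>t. ap (exp (t *\<^sub>R S)) z) has_vector_derivative ap S (ap (exp (t *\<^sub>R S)) z)) (at t)" for z t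
    using ap.has_vector_derivative[OF exp_deriv'[of S t UNIV] has_vector_derivative_const[of z]]
    by (simp add: ap_mult)
  have "(f has_real_derivative 0) (at t)" for t
  proof -
    have "(f has_vector_derivative
       (ap (exp (t *\<^sub>R S)) x \<bullet> ap S (ap (exp (t *\<^sub>R S)) y) + ap S (ap (exp (t *\<^sub>R S)) x) \<bullet> ap (exp (t *\<^sub>R S)) y)) (at t)"
      unfolding f_def by (rule bounded_bilinear.has_vector_derivative[OF bounded_bilinear_inner d d])
    moreover have "ap (exp (t *\<^sub>R S)) x \<bullet> ap S (ap (exp (t *\<^sub>R S)) y) + ap S (ap (exp (t *\<^sub>R S)) x) \<bullet> ap (exp (t *\<^sub>R S)) y = 0"
      using assms unfolding skew_def by simp
    ultimately show ?thesis by (simp add: has_real_derivative_iff_has_vector_derivative)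
  qed
  then have "f t = f 0" by (metis DERIV_isconst_all)
  then show ?thesis by (simp add: f_def)
qed

lemma skew_exp_norm:
  assumes "skew S"
  shows "norm (ap (exp (t *\<^sub>R S)) x) = norm x"
  using skew_exp_inner[OF assms, of t x x] by (simp add: norm_eq_sqrt_inner)

lemma skew_exp_adj:
  assumes "skew S"
  shows "ap (exp (t *\<^sub>R S)) x \<bullet> y = x \<bullet> ap (exp ((- t) *\<^sub>R S)) y"
proof -
  have "y = ap (exp (t *\<^sub>R S)) (ap (exp ((- t) *\<^sub>R S)) y)"
    by (simp add: ap_mult[symmetric] exp_minus_inverse)
  then have "ap (exp (t *\<^sub>R S)) x \<bullet> y = ap (exp (t *\<^sub>R S)) x \<bullet> ap (exp (t *\<^sub>R S)) (ap (exp ((- t) *\<^sub>R S)) y)"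
    by simp
  also have "\<dots> = x \<bullet> ap (exp ((- t) *\<^sub>R S)) y" by (rule skew_exp_inner[OF assms])
  finally show ?thesis .
qed

lemma onorm_scaleR_const_le: "onorm (\<lambda>h::real. h *\<^sub>R c) \<le> norm c"
  by (rule onorm_bound) (auto simp: mult.commute)

lemma taylor_bound:
  fixes f :: "real \<Rightarrow> 'b::real_normed_vector"
  assumes f0: "f 0 = 0"
    and d: "\<And>y. y \<in> {-1..1} \<Longrightarrow> (f has_vector_derivative f' y) (at y)"
    and b: "\<And>y. y \<in> {-1..1} \<Longrightarrow> norm (f' y) \<le> K * \<bar>y\<bar> ^ n"
    and z: "z \<in> {-1..1}"
  shows "norm (f z) \<le> K * \<bar>z\<bar> ^ (Suc n)"
proof -
  let ?S = "closed_segment 0 z"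
  have sub: "?S \<subseteq> {-1..1}"
    using z by (auto simp: closed_segment_eq_real_ivl split: if_splits)
  have K0: "0 \<le> K" using b[of 1] by (auto intro: order_trans[OF norm_ge_zero])
  have "norm (f z - f 0) \<le> (K * \<bar>z\<bar> ^ n) * norm (z - 0)"
  proof (rule differentiable_bound[where f' = "\<lambda>y h. h *\<^sub>R f' y"])
    show "convex ?S" by simp
    fix x assume x: "x \<in> ?S"
    then have "x \<in> {-1..1}" using sub by auto
    then show "(f has_derivative (\<lambda>h. h *\<^sub>R f' x)) (at x within ?S)"
      using d has_derivative_at_withinI has_vector_derivative_def by blast
    have "\<bar>x\<bar> \<le> \<bar>z\<bar>" using x by (auto simp: closed_segment_eq_real_ivl split: if_splits)
    then have "K * \<bar>x\<bar> ^ n \<le> K * \<bar>z\<bar> ^ n"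
      using K0 by (intro mult_left_mono power_mono) auto
    then show "onorm (\<lambda>h. h *\<^sub>R f' x) \<le> K * \<bar>z\<bar> ^ n"
      using onorm_scaleR_const_le[of "f' x"] b[OF \<open>x \<in> {-1..1}\<close>] by linarith
  qed auto
  then show ?thesis using f0 by (simp add: mult_ac)
qed

lemma local_to_global:
  fixes \<Psi> :: "real \<Rightarrow> 'b::real_normed_vector"
  assumes T: "0 \<le> T" and P0: "\<Psi> 0 = 0"
    and G: "\<And>s t. 0 \<le> s \<Longrightarrow> s \<le> t \<Longrightarrow> t \<le> T \<Longrightarrow> G s \<le> G t"
    and loc: "\<And>e. e > 0 \<Longrightarrow> \<exists>h>0. \<forall>s t. 0 \<le> s \<longrightarrow> s \<le> t \<longrightarrow> t \<le> T \<longrightarrow> t - s < h \<longrightarrow>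
                 norm (\<Psi> t - \<Psi> s) \<le> e * (G t - G s)"
  shows "\<Psi> T = 0"
proof -
  have "norm (\<Psi> T) \<le> e * (G T - G 0)" if e: "e > 0" for e
  proof -
    obtain h where h: "h > 0" and hh: "\<forall>s t. 0 \<le> s \<longrightarrow> s \<le> t \<longrightarrow> t \<le> T \<longrightarrow> t - s < h \<longrightarrow>
                 norm (\<Psi> t - \<Psi> s) \<le> e * (G t - G s)" using loc[OF e] by blast
    obtain N :: nat where N: "T / h < real N" using reals_Archimedean2 by blast
    then have Npos: "N > 0" using T h by (metis divide_nonneg_pos of_nat_0_less_iff order_le_less_trans)
    define p where "p k = real k * T / real N" for k
    have step: "T / real N < h" using N h Npos by (simp add: field_simps)
    have "k \<le> N \<longrightarrow> norm (\<Psi> (p k)) \<le> e * (G (p k) - G 0)" for k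
    proof (induction k)
      case 0 then show ?case by (simp add: p_def P0)
    next
      case (Suc k)
      show ?case
      proof
        assume k: "Suc k \<le> N"
        have kN: "real (Suc k) \<le> real N" using k by linarith
        have "real (Suc k) * T \<le> real N * T" using kN T by (rule mult_right_mono)
        then have pk: "0 \<le> p k" "p k \<le> p (Suc k)" "p (Suc k) \<le> T"
          using T Npos by (auto simp: p_def field_simps)
        have d: "p (Suc k) - p k = T / real N" by (simp add: p_def add_divide_distrib algebra_simps)
        have "norm (\<Psi> (p (Suc k)) - \<Psi> (p k)) \<le> e * (G (p (Suc k)) - G (p k))"
          using hh pk d step by auto
        moreover have "norm (\<Psi> (p k)) \<le> e * (G (p k) - G 0)" using Suc k by auto
        ultimately have "norm (\<Psi> (p (Suc k))) \<le> e * (G (p (Suc k)) - G (p k)) + e * (G (p k) - G 0)"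
          using norm_triangle_sub[of "\<Psi> (p (Suc k))" "\<Psi> (p k)"] by linarith
        then show "norm (\<Psi> (p (Suc k))) \<le> e * (G (p (Suc k)) - G 0)" by (simp add: algebra_simps)
      qed
    qed
    then have "norm (\<Psi> (p N)) \<le> e * (G (p N) - G 0)" by blast
    moreover have "p N = T" using Npos by (simp add: p_def)
    ultimately show ?thesis by simp
  qed
  moreover have "G 0 \<le> G T" using G T by auto
  ultimately have "norm (\<Psi> T) \<le> 0"
  proof -
    assume H: "\<And>e. e > 0 \<Longrightarrow> norm (\<Psi> T) \<le> e * (G T - G 0)"
    show "norm (\<Psi> T) \<le> 0"
    proof (rule field_le_epsilon)
      fix e :: real assume e: "e > 0"
      have "norm (\<Psi> T) \<le> (e / (G T - G 0 + 1)) * (G T - G 0)"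
        using H[of "e / (G T - G 0 + 1)"] e \<open>G 0 \<le> G T\<close> by auto
      also have "\<dots> \<le> e" using e \<open>G 0 \<le> G T\<close> by (simp add: field_simps)
      finally show "norm (\<Psi> T) \<le> 0 + e" by simp
    qed
  qed
  then show ?thesis by simp
qed

lemma scaleR_cvec_comp: "((r::real) *\<^sub>R (x::complex^'n)) $ i = complex_of_real r * x $ i"
  unfolding vector_scaleR_component by (rule scaleR_conv_of_real)

lemma inner_complex_herm: "(z::complex) \<bullet> w = Re (z * cnj w)"
  by (simp add: inner_complex_def)

lemma inner_herm: "(x::complex^'n) \<bullet> y = Re (herm x y)"
  by (simp add: inner_vec_def herm_def inner_complex_herm Re_sum)

lemma herm_scale_left: "herm (c *s x) y = c * herm x y"
  by (simp add: herm_def sum_distrib_left mult.assoc)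

lemma herm_scale_right: "herm x (c *s y) = cnj c * herm x y"
  by (simp add: herm_def sum_distrib_left mult_ac)

lemma Im_herm: "Im (herm x y) = (x::complex^'n) \<bullet> (\<i> *s y)"
  by (simp add: inner_herm herm_scale_right)

lemma herm_add_left: "herm (x + y) z = herm x z + herm y z"
  by (simp add: herm_def distrib_right sum.distrib)
lemma herm_diff_left: "herm (x - y) z = herm x z - herm y z"
  by (simp add: herm_def left_diff_distrib sum_subtractf)

lemma herm_minus_left: "herm (- x) y = - herm x y"
  by (simp add: herm_def sum_negf)

lemma cmat_minus: "cmat M *v (- x) = - (cmat M *v x)"
  by (simp add: matrix_vector_mult_def vec_eq_iff sum_negf)

lemma scale_minus_left: "(- c) *s (x::complex^'n) = - (c *s x)"
  by (simp add: vec_eq_iff)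

lemma herm_cvec: "herm (cvec a) (cvec b) = complex_of_real (a \<bullet> b)"
  by (simp add: herm_def cvec_def inner_vec_def)

lemma cmat_cvec: "cmat M *v cvec a = cvec (M *v a)"
  by (simp add: cmat_def cvec_def matrix_vector_mult_def vec_eq_iff)

lemma cmat_scale: "cmat M *v (c *s x) = c *s (cmat M *v x)"
  by (simp add: matrix_vector_mult_def vec_eq_iff sum_distrib_left mult_ac)

lemma cmat_mult: "cmat M *v (cmat N *v x) = cmat (M ** N) *v x"
  by (simp add: cmat_def matrix_vector_mul_assoc matrix_matrix_mult_def vec_eq_iff sum_distrib_left
      sum_distrib_right)

lemma cmat_diff: "cmat (M - N) *v x = cmat M *v x - cmat N *v x"
  by (simp add: cmat_def matrix_vector_mult_def vec_eq_iff left_diff_distrib sum_subtractf)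

lemma herm_sym:
  assumes "transpose M = M"
  shows "herm (cmat M *v x) y = herm x (cmat M *v y)"
proof -
  have s: "M $ i $ j = M $ j $ i" for i j
  proof -
    have "M $ i $ j = transpose M $ i $ j" using assms by simp
    then show ?thesis by (simp add: transpose_def)
  qed
  have "herm (cmat M *v x) y = (\<Sum>i\<in>UNIV. \<Sum>j\<in>UNIV. complex_of_real (M $ i $ j) * x $ j * cnj (y $ i))"
    by (simp add: herm_def cmat_def matrix_vector_mult_def sum_distrib_right)
  also have "\<dots> = (\<Sum>j\<in>UNIV. \<Sum>i\<in>UNIV. complex_of_real (M $ i $ j) * x $ j * cnj (y $ i))"
    by (rule sum.swap)
  also have "\<dots> = herm x (cmat M *v y)"
    by (simp add: herm_def cmat_def matrix_vector_mult_def sum_distrib_left s mult_ac)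
  finally show ?thesis .
qed

lemma norm_cvec: "norm (cvec a) = norm a"
  by (simp add: norm_vec_def cvec_def)

lemma scaleR_cvec_vec: "complex_of_real r *s (x::complex^'n) = r *\<^sub>R x"
  by (simp add: vec_eq_iff scaleR_cvec_comp del: vector_scaleR_component)

lemma bounded_linear_cmat: "bounded_linear (\<lambda>x::complex^'n. c *s (cmat M *v x))"
proof -
  have "linear (\<lambda>x::complex^'n. c *s (cmat M *v x))"
    by (rule linearI) (simp_all add: vec_eq_iff matrix_vector_mult_def sum.distrib distrib_left
        sum_distrib_left scaleR_cvec_comp mult_ac del: vector_scaleR_component)
  then show ?thesis by (simp add: linear_conv_bounded_linear)
qed

lemma scale_scale: "a *s (b *s (x::complex^'n)) = (a * b) *s x"
  by (simp add: vec_eq_iff mult.assoc)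

lemma scale_add: "c *s (x + y) = c *s x + c *s (y::complex^'n)"
  by (simp add: vec_eq_iff distrib_left)
lemma scale_diff: "c *s (x - y) = c *s x - c *s (y::complex^'n)"
  by (simp add: vec_eq_iff right_diff_distrib)
lemma scale_scaleR: "c *s (r *\<^sub>R y) = r *\<^sub>R (c *s (y::complex^'n))"
  by (simp add: vec_eq_iff scaleR_cvec_comp mult_ac del: vector_scaleR_component)

lemma norm_scale_cis: "norm (cis a *s (x::complex^'n)) = norm x"
  by (simp add: norm_vec_def norm_mult)

lemma norm_scale_ii: "norm (\<i> *s (x::complex^'n)) = norm x"
  by (simp add: norm_vec_def norm_mult)

lemma herm_self: "herm x x = complex_of_real ((norm (x::complex^'n))\<^sup>2)"
proof -
  have "herm x x = complex_of_real (x \<bullet> x)"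
    by (simp add: herm_def inner_vec_def inner_complex_def complex_eq_iff Re_sum Im_sum
        power2_eq_square)
  then show ?thesis by (simp add: power2_norm_eq_inner)
qed

lemma norm_exp_le1:
  fixes S :: "'a::euclidean_space endo"
  assumes "\<bar>y\<bar> \<le> 1"
  shows "norm (exp (y *\<^sub>R S)) \<le> exp (norm S)"
proof -
  have "norm (exp (y *\<^sub>R S)) \<le> exp (norm (y *\<^sub>R S))" by (rule norm_exp)
  also have "norm (y *\<^sub>R S) \<le> norm S" using assms
    by (simp add: mult_left_le_one_le)
  then have "exp (norm (y *\<^sub>R S)) \<le> exp (norm S)" by simp
  finally show ?thesis .
qed

lemma exp_minus_one_bound:
  fixes S :: "'a::euclidean_space endo"
  assumes "\<bar>y\<bar> \<le> 1"
  shows "norm (exp (y *\<^sub>R S) - 1) \<le> (exp (norm S) * norm S) * \<bar>y\<bar>"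
proof -
  have "norm (exp (y *\<^sub>R S) - 1) \<le> (exp (norm S) * norm S) * \<bar>y\<bar> ^ Suc 0"
  proof (rule taylor_bound[where f = "\<lambda>y. exp (y *\<^sub>R S) - 1" and f' = "\<lambda>y. exp (y *\<^sub>R S) * S"])
    fix z :: real assume z: "z \<in> {-1..1}"
    show "((\<lambda>y. exp (y *\<^sub>R S) - 1) has_vector_derivative exp (z *\<^sub>R S) * S) (at z)"
      using exp_deriv[of S z UNIV] by (auto intro!: derivative_eq_intros)
    have "norm (exp (z *\<^sub>R S) * S) \<le> norm (exp (z *\<^sub>R S)) * norm S" by (rule norm_mult_ineq)
    also have "\<dots> \<le> exp (norm S) * norm S"
      using norm_exp_le1[of z S] z by (intro mult_right_mono) auto
    finally show "norm (exp (z *\<^sub>R S) * S) \<le> exp (norm S) * norm S * \<bar>z\<bar> ^ 0" by simp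
  qed (use assms in auto)
  then show ?thesis by simp
qed

lemma exp_taylor2_bound:
  fixes S :: "'a::euclidean_space endo"
  assumes "\<bar>y\<bar> \<le> 1"
  shows "norm (exp (y *\<^sub>R S) - 1 - y *\<^sub>R S) \<le> (exp (norm S) * norm S * norm S) * \<bar>y\<bar>\<^sup>2"
proof -
  have "norm (exp (y *\<^sub>R S) - 1 - y *\<^sub>R S) \<le> (exp (norm S) * norm S * norm S) * \<bar>y\<bar> ^ Suc 1"
  proof (rule taylor_bound[where f = "\<lambda>y. exp (y *\<^sub>R S) - 1 - y *\<^sub>R S" and f' = "\<lambda>y. (exp (y *\<^sub>R S) - 1) * S"])
    fix z :: real assume z: "z \<in> {-1..1}"
    show "((\<lambda>y. exp (y *\<^sub>R S) - 1 - y *\<^sub>R S) has_vector_derivative (exp (z *\<^sub>R S) - 1) * S) (at z)"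
      using exp_deriv[of S z UNIV]
      by (auto intro!: derivative_eq_intros simp: algebra_simps)
    have "norm ((exp (z *\<^sub>R S) - 1) * S) \<le> norm (exp (z *\<^sub>R S) - 1) * norm S" by (rule norm_mult_ineq)
    also have "\<dots> \<le> ((exp (norm S) * norm S) * \<bar>z\<bar>) * norm S"
      using exp_minus_one_bound[of z S] z by (intro mult_right_mono) auto
    finally show "norm ((exp (z *\<^sub>R S) - 1) * S) \<le> exp (norm S) * norm S * norm S * \<bar>z\<bar> ^ 1"
      by (simp add: mult_ac)
  qed (use assms in auto)
  then show ?thesis by (simp add: power2_eq_square)
qed

definition Phi :: "'a::euclidean_space endo \<Rightarrow> 'a endo \<Rightarrow> real \<Rightarrow> 'a endo" where
  "Phi S D z = exp (z *\<^sub>R (- S)) * D * exp (z *\<^sub>R S)"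

definition cm :: "'a::euclidean_space endo \<Rightarrow> 'a endo \<Rightarrow> 'a endo" where
  "cm S D = D * S - S * D"

lemma Phi_deriv: "((Phi S D) has_vector_derivative Phi S (cm S D) z) (at z)"
proof -
  have d1: "((\<lambda>z. exp (z *\<^sub>R (- S))) has_vector_derivative exp (z *\<^sub>R (- S)) * (- S)) (at z)"
    by (rule exp_deriv)
  have d2: "((\<lambda>z. exp (z *\<^sub>R S)) has_vector_derivative S * exp (z *\<^sub>R S)) (at z)"
    by (rule exp_deriv')
  have "((\<lambda>z. exp (z *\<^sub>R (- S)) * D * exp (z *\<^sub>R S)) has_vector_derivative
      (exp (z *\<^sub>R (- S)) * D * (S * exp (z *\<^sub>R S)) + exp (z *\<^sub>R (- S)) * (- S) * D * exp (z *\<^sub>R S))) (at z)"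
    using has_vector_derivative_mult[OF has_vector_derivative_mult_left[OF d1, of D] d2]
    by (simp add: mult.assoc)
  moreover have "exp (z *\<^sub>R (- S)) * D * (S * exp (z *\<^sub>R S)) + exp (z *\<^sub>R (- S)) * (- S) * D * exp (z *\<^sub>R S)
     = Phi S (cm S D) z"
    by (simp add: Phi_def cm_def algebra_simps)
  ultimately show ?thesis unfolding Phi_def[abs_def] by simp
qed

lemma Phi_0[simp]: "Phi S D 0 = D"
  by (simp add: Phi_def)

lemma Phi_bound:
  assumes "\<bar>z\<bar> \<le> 1"
  shows "norm (Phi S D z) \<le> exp (norm S) * exp (norm S) * norm D"
proof -
  have "norm (Phi S D z) \<le> norm (exp (z *\<^sub>R (- S))) * norm D * norm (exp (z *\<^sub>R S))"
    unfolding Phi_def by (meson norm_mult_ineq order_trans mult_right_mono norm_ge_zero)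
  also have "\<dots> \<le> exp (norm S) * norm D * exp (norm S)"
    using norm_exp_le1[OF assms, of "- S"] norm_exp_le1[OF assms, of S]
    by (intro mult_mono) auto
  finally show ?thesis by (simp add: mult_ac)
qed

lemma Phi_taylor1:
  assumes "\<bar>z\<bar> \<le> 1"
  shows "norm (Phi S D z - D) \<le> (exp (norm S) * exp (norm S) * norm (cm S D)) * \<bar>z\<bar>"
proof -
  have "norm (Phi S D z - D) \<le> (exp (norm S) * exp (norm S) * norm (cm S D)) * \<bar>z\<bar> ^ Suc 0"
  proof (rule taylor_bound[where f = "\<lambda>z. Phi S D z - D" and f' = "Phi S (cm S D)"])
    fix y :: real assume "y \<in> {-1..1}"
    then show "norm (Phi S (cm S D) y) \<le> exp (norm S) * exp (norm S) * norm (cm S D) * \<bar>y\<bar> ^ 0"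
      using Phi_bound[of y S "cm S D"] by (auto simp: abs_le_iff)
    show "((\<lambda>z. Phi S D z - D) has_vector_derivative Phi S (cm S D) y) (at y)"
      using Phi_deriv[of S D y] by (auto intro!: derivative_eq_intros)
  qed (use assms in auto)
  then show ?thesis by simp
qed

lemma Phi_taylor3:
  assumes "\<bar>z\<bar> \<le> 1"
  shows "norm (Phi S D z - D - z *\<^sub>R cm S D - (z\<^sup>2 / 2) *\<^sub>R cm S (cm S D))
     \<le> (exp (norm S) * exp (norm S) * norm (cm S (cm S (cm S D)))) * \<bar>z\<bar> ^ 3"
proof -
  define k where "k = exp (norm S) * exp (norm S) * norm (cm S (cm S (cm S D)))"
  have b2: "norm (Phi S (cm S (cm S D)) y - cm S (cm S D)) \<le> k * \<bar>y\<bar> ^ 1" if "y \<in> {-1..1}" for y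
    using Phi_taylor1[of y S "cm S (cm S D)"] that by (simp add: k_def abs_le_iff)
  have b1: "norm (Phi S (cm S D) y - cm S D - y *\<^sub>R cm S (cm S D)) \<le> k * \<bar>y\<bar> ^ Suc 1"
    if "y \<in> {-1..1}" for y
  proof (rule taylor_bound[where f' = "\<lambda>y. Phi S (cm S (cm S D)) y - cm S (cm S D)"])
    fix w :: real assume "w \<in> {-1..1}"
    show "((\<lambda>y. Phi S (cm S D) y - cm S D - y *\<^sub>R cm S (cm S D)) has_vector_derivative
        Phi S (cm S (cm S D)) w - cm S (cm S D)) (at w)"
      using Phi_deriv[of S "cm S D" w] by (auto intro!: derivative_eq_intros)
  qed (use b2 that in auto)
  have "norm (Phi S D z - D - z *\<^sub>R cm S D - (z\<^sup>2 / 2) *\<^sub>R cm S (cm S D)) \<le> k * \<bar>z\<bar> ^ Suc 2"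
  proof (rule taylor_bound[where f' = "\<lambda>y. Phi S (cm S D) y - cm S D - y *\<^sub>R cm S (cm S D)"])
    fix w :: real assume "w \<in> {-1..1}"
    show "((\<lambda>z. Phi S D z - D - z *\<^sub>R cm S D - (z\<^sup>2 / 2) *\<^sub>R cm S (cm S D)) has_vector_derivative
        Phi S (cm S D) w - cm S D - w *\<^sub>R cm S (cm S D)) (at w)"
      using Phi_deriv[of S D w]
      by (auto intro!: derivative_eq_intros simp: power2_eq_square)
  next
    fix y :: real assume "y \<in> {-1..1}"
    then show "norm (Phi S (cm S D) y - cm S D - y *\<^sub>R cm S (cm S D)) \<le> k * \<bar>y\<bar> ^ 2"
      using b1[of y] by (simp add: power2_eq_square)
  qed (use assms in auto)
  then show ?thesis by (simp add: k_def)
qed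

lemma exp_scaleR_cont_UNIV: "continuous_on UNIV (\<lambda>z. exp (z *\<^sub>R (S::'a::euclidean_space endo)))"
  using exp_deriv[of S] by (meson continuous_on_vector_derivative)

lemma exp_scaleR_cont:
  fixes S :: "'a::euclidean_space endo"
  assumes "continuous_on D g"
  shows "continuous_on D (\<lambda>t. exp (g t *\<^sub>R S))"
  using continuous_on_compose2[OF exp_scaleR_cont_UNIV assms] by auto

lemma sym_inner:
  fixes M :: "real^'n^'n"
  assumes "transpose M = M"
  shows "(M *v x) \<bullet> y = x \<bullet> (M *v y)"
proof -
  have "M *v x = x v* M" using assms transpose_matrix_vector by metis
  then show ?thesis by (simp add: dot_lmul_matrix)
qed

locale setting =
  fixes H0 H1 :: "real^'n^'n"
    and \<phi> :: "'n \<Rightarrow> real^'n"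
    and lam :: "'n \<Rightarrow> real"
    and i1 K :: 'n
  assumes symH0: "transpose H0 = H0"
    and symH1: "transpose H1 = H1"
    and orth: "\<forall>i j. \<phi> i \<bullet> \<phi> j = (if i = j then 1 else 0)"
    and eig: "\<forall>i. H0 *v \<phi> i = lam i *\<^sub>R \<phi> i"
    and hK0: "(H1 *v \<phi> i1) \<bullet> \<phi> K = 0"
    and hK1: "(comm H1 (comm H0 H1) *v \<phi> i1) \<bullet> \<phi> K \<noteq> 0"
begin

definition A :: "(complex^'n) endo" where "A = mk (\<lambda>x. (- \<i>) *s (cmat H0 *v x))"
definition B :: "(complex^'n) endo" where "B = mk (\<lambda>x. \<i> *s (cmat H1 *v x))"
definition aK :: real where "aK = (comm H1 (comm H0 H1) *v \<phi> i1) \<bullet> \<phi> K"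
definition C1 :: "(complex^'n) endo" where "C1 = cm B A"
definition C2 :: "(complex^'n) endo" where "C2 = cm B C1"

lemma apA: "ap A x = (- \<i>) *s (cmat H0 *v x)"
  unfolding A_def by (rule ap_mk[OF bounded_linear_cmat])
lemma apB: "ap B x = \<i> *s (cmat H1 *v x)"
  unfolding B_def by (rule ap_mk[OF bounded_linear_cmat])

lemma skew_cmat:
  assumes "transpose M = M" and "\<And>x. ap S x = c *s (cmat M *v x)" and "cnj c = - c"
  shows "skew S"
  unfolding skew_def
proof (intro allI)
  fix x y
  have "ap S x \<bullet> y = Re (c * herm x (cmat M *v y))"
    by (simp add: assms(2) inner_herm herm_scale_left herm_sym[OF assms(1)])
  moreover have "x \<bullet> ap S y = Re (cnj c * herm x (cmat M *v y))"
    by (simp add: assms(2) inner_herm herm_scale_right)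
  ultimately show "ap S x \<bullet> y = - (x \<bullet> ap S y)" using assms(3) by simp
qed

lemma skewA: "skew A" by (rule skew_cmat[OF symH0 apA]) simp
lemma skewB: "skew B" by (rule skew_cmat[OF symH1 apB]) simp

lemma skew_self: "skew S \<Longrightarrow> ap S x \<bullet> x = 0"
  unfolding skew_def by (metis inner_commute add.inverse_unique add_eq_0_iff2 neg_equal_zero)

lemma clinA: "ap A (c *s x) = c *s ap A x"
  by (simp add: apA cmat_scale scale_scale mult.commute)
lemma clinB: "ap B (c *s x) = c *s ap B x"
  by (simp add: apB cmat_scale scale_scale mult.commute)

lemma apA_phi: "ap A (c *s cvec (\<phi> j)) = (c * (- \<i> * complex_of_real (lam j))) *s cvec (\<phi> j)"
proof -
  have "cmat H0 *v cvec (\<phi> j) = cvec (lam j *\<^sub>R \<phi> j)"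
    using eig by (simp add: cmat_cvec)
  also have "\<dots> = complex_of_real (lam j) *s cvec (\<phi> j)"
    by (simp add: cvec_def vec_eq_iff)
  finally have "cmat H0 *v cvec (\<phi> j) = complex_of_real (lam j) *s cvec (\<phi> j)" .
  then have "ap A (cvec (\<phi> j)) = ((- \<i>) * complex_of_real (lam j)) *s cvec (\<phi> j)"
    by (simp only: apA scale_scale)
  then show ?thesis by (simp only: clinA scale_scale)
qed

lemma skew_exp_adjA: "ap (exp (t *\<^sub>R A)) x \<bullet> y = x \<bullet> ap (exp ((- t) *\<^sub>R A)) y"
  by (rule skew_exp_adj[OF skewA])

lemma expA_phi: "ap (exp (t *\<^sub>R A)) (c *s cvec (\<phi> j)) = (c * cis (- lam j * t)) *s cvec (\<phi> j)"
proof -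
  define y where "y t = (c * cis (- lam j * t)) *s cvec (\<phi> j)" for t
  define z where "z t = ap (exp (t *\<^sub>R (- A))) (y t)" for t
  have bl: "bounded_linear (\<lambda>w::complex. w *s cvec (\<phi> j))"
  proof -
    have "linear (\<lambda>w::complex. w *s cvec (\<phi> j))"
    proof (rule linearI)
      fix b1 b2 :: complex show "(b1 + b2) *s cvec (\<phi> j) = b1 *s cvec (\<phi> j) + b2 *s cvec (\<phi> j)"
        by (simp add: vec_eq_iff distrib_right)
    next
      fix r :: real and b :: complex
      show "(r *\<^sub>R b) *s cvec (\<phi> j) = r *\<^sub>R (b *s cvec (\<phi> j))"
        unfolding vec_eq_iff by (simp add: scaleR_cvec_comp del: vector_scaleR_component) (simp add: scaleR_conv_of_real)
    qed
    then show ?thesis by (simp add: linear_conv_bounded_linear)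
  qed
  have dc: "((\<lambda>t. c * cis (- lam j * t)) has_vector_derivative (c * (- \<i> * complex_of_real (lam j)) * cis (- lam j * t))) (at t)" for t
  proof -
    have "((\<lambda>t. cis (- lam j * t)) has_derivative (\<lambda>h. (h * (- lam j)) *\<^sub>R (\<i> * cis (- lam j * t)))) (at t)"
      by (rule has_derivative_cis) (auto intro!: derivative_eq_intros)
    then have "((\<lambda>t. cis (- lam j * t)) has_vector_derivative ((- lam j) *\<^sub>R (\<i> * cis (- lam j * t)))) (at t)"
      by (simp add: has_vector_derivative_def mult.commute)
    from has_vector_derivative_mult_right[OF this, of c]
    show ?thesis by (simp add: scaleR_conv_of_real mult_ac)
  qed
  have dy: "(y has_vector_derivative ap A (y t)) (at t)" for t
  proof -
    have "(y has_vector_derivative ((c * (- \<i> * complex_of_real (lam j)) * cis (- lam j * t)) *s cvec (\<phi> j))) (at t)"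
      unfolding y_def by (rule bounded_linear.has_vector_derivative[OF bl dc])
    moreover have "ap A (y t) = (c * (- \<i> * complex_of_real (lam j)) * cis (- lam j * t)) *s cvec (\<phi> j)"
      unfolding y_def by (simp add: apA_phi mult_ac)
    ultimately show ?thesis by simp
  qed
  have dz: "(z has_vector_derivative 0) (at t)" for t
  proof -
    have "(z has_vector_derivative (ap (exp (t *\<^sub>R (- A))) (ap A (y t)) + ap (- A * exp (t *\<^sub>R (- A))) (y t))) (at t)"
      unfolding z_def by (rule ap.has_vector_derivative[OF exp_deriv' dy])
    moreover have "- A * exp (t *\<^sub>R (- A)) = - (exp (t *\<^sub>R (- A)) * A)"
      using exp_times_scaleR_commute[of t "- A"] by simp
    moreover have cmu: "A * exp (- (t *\<^sub>R A)) = exp (- (t *\<^sub>R A)) * A"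
      using exp_times_scaleR_commute[of t "- A"] by simp
    moreover have "ap A (ap (exp (- (t *\<^sub>R A))) w) = ap (exp (- (t *\<^sub>R A))) (ap A w)" for w
      using cmu by (metis ap_mult)
    ultimately show ?thesis by (simp add: ap_minus_left ap_mult)
  qed
  have "z t = z 0"
    using dz by (metis DERIV_isconst_all has_real_derivative_iff_has_vector_derivative has_vector_derivative_zero_constant UNIV_I convex_UNIV)
  then have "z t = c *s cvec (\<phi> j)" by (simp add: z_def y_def)
  then have "ap (exp (t *\<^sub>R A)) (z t) = ap (exp (t *\<^sub>R A)) (c *s cvec (\<phi> j))" by simp
  moreover have "ap (exp (t *\<^sub>R A)) (z t) = y t"
    unfolding z_def ap_mult[symmetric] using exp_scaleR_inv[of t A] by simp
  ultimately show ?thesis by (simp add: y_def)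
qed

lemma apC1: "ap C1 x = cmat (comm H0 H1) *v x"
proof -
  have "ap C1 x = ap A (ap B x) - ap B (ap A x)"
    by (simp add: C1_def cm_def ap_diff_left ap_mult)
  also have "ap A (ap B x) = cmat (H0 ** H1) *v x"
    by (simp only: apA apB cmat_scale scale_scale cmat_mult) simp
  also have "ap B (ap A x) = cmat (H1 ** H0) *v x"
    by (simp only: apA apB cmat_scale scale_scale cmat_mult) simp
  finally show ?thesis by (simp add: comm_def cmat_diff)
qed

lemma apC2: "ap C2 x = (- \<i>) *s (cmat (comm H1 (comm H0 H1)) *v x)"
proof -
  have "ap C2 x = \<i> *s (cmat (comm H0 H1 ** H1) *v x) - \<i> *s (cmat (H1 ** comm H0 H1) *v x)"
    by (simp add: C2_def cm_def ap_diff_left ap_mult apC1 apB cmat_scale cmat_mult)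
  also have "\<dots> = (- \<i>) *s (cmat (comm H1 (comm H0 H1)) *v x)"
    by (simp add: comm_def cmat_diff scale_diff vec_eq_iff algebra_simps)
  finally show ?thesis .
qed

lemma herm_C1: "herm (ap C1 (cvec (\<phi> i1))) (cvec (\<phi> K)) = 0"
proof -
  have "(comm H0 H1 *v \<phi> i1) \<bullet> \<phi> K = (H0 *v (H1 *v \<phi> i1)) \<bullet> \<phi> K - (H1 *v (H0 *v \<phi> i1)) \<bullet> \<phi> K"
    by (simp add: comm_def matrix_vector_mult_diff_rdistrib matrix_vector_mul_assoc[symmetric] inner_diff_left)
  also have "(H0 *v (H1 *v \<phi> i1)) \<bullet> \<phi> K = lam K * ((H1 *v \<phi> i1) \<bullet> \<phi> K)"
    using eig by (simp add: sym_inner[OF symH0])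
  also have "(H1 *v (H0 *v \<phi> i1)) \<bullet> \<phi> K = lam i1 * ((H1 *v \<phi> i1) \<bullet> \<phi> K)"
    using eig by (simp add: matrix_vector_mult_scaleR)
  finally have "(comm H0 H1 *v \<phi> i1) \<bullet> \<phi> K = 0" using hK0 by simp
  then show ?thesis by (simp add: apC1 cmat_cvec herm_cvec)
qed

lemma herm_C2: "herm (ap C2 (cvec (\<phi> i1))) (cvec (\<phi> K)) = - \<i> * complex_of_real aK"
  by (simp add: apC2 cmat_cvec herm_scale_left herm_cvec aK_def scale_minus_left herm_minus_left)

lemma herm_B1: "herm (ap B (cvec (\<phi> i1))) (cvec (\<phi> K)) = 0"
  by (simp add: apB cmat_cvec herm_scale_left herm_cvec hK0)

end

lemma cont_bounded:
  fixes f :: "real \<Rightarrow> 'b::real_normed_vector"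
  assumes "continuous_on {a..b} f"
  obtains M where "M \<ge> 0" "\<And>t. t \<in> {a..b} \<Longrightarrow> norm (f t) \<le> M"
proof -
  have "bounded (f ` {a..b})" by (rule compact_imp_bounded[OF compact_continuous_image[OF assms]]) simp
  then obtain M where "\<forall>x\<in>f ` {a..b}. norm x \<le> M" by (auto simp: bounded_iff)
  then show ?thesis using that[of "max M 0"] by force
qed

lemma cont_unif:
  fixes f :: "real \<Rightarrow> 'b::real_normed_vector"
  assumes "continuous_on {a..b} f" "e > 0"
  obtains d where "d > 0" "\<And>x y. x \<in> {a..b} \<Longrightarrow> y \<in> {a..b} \<Longrightarrow> \<bar>y - x\<bar> < d \<Longrightarrow> norm (f y - f x) < e"
proof -
  have "uniformly_continuous_on {a..b} f" by (rule compact_uniformly_continuous[OF assms(1)]) simp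
  then obtain d where "d > 0" "\<forall>x\<in>{a..b}. \<forall>y\<in>{a..b}. dist y x < d \<longrightarrow> dist (f y) (f x) < e"
    using assms(2) unfolding uniformly_continuous_on_def by metis
  then show ?thesis using that[of d] by (auto simp: dist_norm)
qed

lemma integrable_u_scale:
  fixes u :: "real \<Rightarrow> real" and c :: "real \<Rightarrow> 'b::euclidean_space"
  assumes u: "u absolutely_integrable_on {a..b}" and c: "continuous_on {a..b} c"
  shows "(\<lambda>r. u r *\<^sub>R c r) absolutely_integrable_on {a..b}"
proof -
  have bl: "bilinear (\<lambda>(x::'b) (y::real). y *\<^sub>R x)"
    by (auto simp: bilinear_def intro!: linearI simp: algebra_simps)
  have "c \<in> borel_measurable (lebesgue_on {a..b})"
    by (rule continuous_imp_measurable_on_sets_lebesgue[OF c]) simp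
  moreover have "bounded (c ` {a..b})" by (rule compact_imp_bounded[OF compact_continuous_image[OF c]]) simp
  ultimately show ?thesis
    using absolutely_integrable_bounded_measurable_product[OF bl _ _ _ u] by simp
qed

lemma integral_u_scale_bound:
  fixes u :: "real \<Rightarrow> real" and c :: "real \<Rightarrow> 'b::euclidean_space"
  assumes u: "u absolutely_integrable_on {a..b}" and c: "continuous_on {a..b} c"
    and M: "\<And>r. r \<in> {a..b} \<Longrightarrow> norm (c r) \<le> M"
  shows "norm (integral {a..b} (\<lambda>r. u r *\<^sub>R c r)) \<le> integral {a..b} (\<lambda>r. \<bar>u r\<bar>) * M"
proof -
  have "norm (integral {a..b} (\<lambda>r. u r *\<^sub>R c r)) \<le> integral {a..b} (\<lambda>r. \<bar>u r\<bar> * M)"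
  proof (rule integral_norm_bound_integral)
    show "(\<lambda>r. u r *\<^sub>R c r) integrable_on {a..b}"
      using integrable_u_scale[OF u c] by (simp add: absolutely_integrable_on_def)
    show "(\<lambda>r. \<bar>u r\<bar> * M) integrable_on {a..b}"
      using u by (simp add: absolutely_integrable_on_def integrable_on_mult_left)
    fix r assume "r \<in> {a..b}"
    then show "norm (u r *\<^sub>R c r) \<le> \<bar>u r\<bar> * M" using M by (simp add: mult_left_mono)
  qed
  also have "\<dots> = integral {a..b} (\<lambda>r. \<bar>u r\<bar>) * M" by simp
  finally show ?thesis .
qed

locale run = setting H0 H1 \<phi> lam i1 K
  for H0 H1 :: "real^'n^'n" and \<phi> lam i1 K +
  fixes T :: real and u :: "real \<Rightarrow> real" and X :: "real \<Rightarrow> complex^'n"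
  assumes Tpos: "0 < T"
    and uint: "u absolutely_integrable_on {0..T}"
    and sol: "is_solution H0 H1 u (cvec (\<phi> i1)) T X"
begin

definition x0 where "x0 = cvec (\<phi> i1)"
definition F where "F r = ap A (X r) + u r *\<^sub>R ap B (X r)" for r
definition v where "v t = integral {0..t} u" for t
definition U where "U t = integral {0..t} (\<lambda>r. \<bar>u r\<bar>)" for t
definition E where "E t = exp (v t *\<^sub>R (- B))" for t

lemma Xcont: "continuous_on {0..T} X"
  using sol by (simp add: is_solution_def)

lemma F_eq: "(- \<i>) *s (cmat H0 *v X s - complex_of_real (u s) *s (cmat H1 *v X s)) = F s"
  by (simp add: F_def apA apB vec_eq_iff scaleR_cvec_comp algebra_simps del: vector_scaleR_component)

lemma F_has_integral: "t \<in> {0..T} \<Longrightarrow> (F has_integral (X t - x0)) {0..t}"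
  using sol unfolding is_solution_def x0_def F_eq by blast

lemma uint_sub: "{a..b} \<subseteq> {0..T} \<Longrightarrow> u absolutely_integrable_on {a..b}"
  by (rule absolutely_integrable_on_subinterval[OF uint]) auto

lemma u_integrable: "{a..b} \<subseteq> {0..T} \<Longrightarrow> u integrable_on {a..b}"
  using uint_sub by (simp add: absolutely_integrable_on_def)

lemma absu_integrable: "{a..b} \<subseteq> {0..T} \<Longrightarrow> (\<lambda>r. \<bar>u r\<bar>) integrable_on {a..b}"
  using uint_sub by (simp add: absolutely_integrable_on_def)

lemma v_cont: "continuous_on {0..T} v"
  unfolding v_def by (rule indefinite_integral_continuous_1[OF u_integrable]) simp

lemma v_diff: "0 \<le> s \<Longrightarrow> s \<le> t \<Longrightarrow> t \<le> T \<Longrightarrow> v t - v s = integral {s..t} u"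
  unfolding v_def using Henstock_Kurzweil_Integration.integral_combine[of 0 s t u] u_integrable[of 0 t] by auto

lemma U_diff: "0 \<le> s \<Longrightarrow> s \<le> t \<Longrightarrow> t \<le> T \<Longrightarrow> U t - U s = integral {s..t} (\<lambda>r. \<bar>u r\<bar>)"
  unfolding U_def using Henstock_Kurzweil_Integration.integral_combine[of 0 s t "\<lambda>r. \<bar>u r\<bar>"] absu_integrable[of 0 t] by auto

lemma U_mono: "0 \<le> s \<Longrightarrow> s \<le> t \<Longrightarrow> t \<le> T \<Longrightarrow> U s \<le> U t"
  using U_diff[of s t] integral_nonneg[OF absu_integrable[of s t]] by force

lemma v_diff_bound: "0 \<le> s \<Longrightarrow> s \<le> t \<Longrightarrow> t \<le> T \<Longrightarrow> \<bar>v t - v s\<bar> \<le> U t - U s"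
proof -
  assume st: "0 \<le> s" "s \<le> t" "t \<le> T"
  have "norm (integral {s..t} u) \<le> integral {s..t} (\<lambda>r. \<bar>u r\<bar>)"
    by (rule integral_norm_bound_integral[OF u_integrable absu_integrable]) (use st in auto)
  then show ?thesis using v_diff[OF st] U_diff[OF st] by simp
qed

lemma E_cont: "continuous_on {0..T} E"
  unfolding E_def by (rule exp_scaleR_cont[OF v_cont])

lemma AX_cont: "continuous_on {0..T} (\<lambda>r. ap A (X r))"
  by (intro ap.continuous_on continuous_intros Xcont)
lemma BX_cont: "continuous_on {0..T} (\<lambda>r. ap B (X r))"
  by (intro ap.continuous_on continuous_intros Xcont)

lemma X_diff: "0 \<le> s \<Longrightarrow> s \<le> t \<Longrightarrow> t \<le> T \<Longrightarrow> X t - X s = integral {s..t} F"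
proof -
  assume st: "0 \<le> s" "s \<le> t" "t \<le> T"
  have it: "F integrable_on {0..t}" using F_has_integral[of t] st by (auto simp: integrable_on_def)
  have "X t - x0 = integral {0..t} F" using F_has_integral[of t] st by (simp add: integral_unique)
  moreover have "X s - x0 = integral {0..s} F" using F_has_integral[of s] st by (simp add: integral_unique)
  ultimately show ?thesis using Henstock_Kurzweil_Integration.integral_combine[OF st(1,2) it] by (simp add: algebra_simps)
qed

lemma v0: "v 0 = 0" by (simp add: v_def)
lemma U0: "U 0 = 0" by (simp add: U_def)
lemma E0: "E 0 = 1" by (simp add: E_def v0)
lemma X0: "X 0 = x0"
proof -
  have "(F has_integral X 0 - x0) {0}" using F_has_integral[of 0] Tpos by simp
  then have "X 0 - x0 = 0" using has_integral_unique has_integral_refl(2) by blast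
  then show ?thesis by simp
qed

lemma F_integrable: "{a..b} \<subseteq> {0..T} \<Longrightarrow> F integrable_on {a..b}"
  using F_has_integral[of T] Tpos integrable_subinterval_real[of F 0 T a b]
  by (auto simp: integrable_on_def)

lemma EAX_cont: "continuous_on {0..T} (\<lambda>r. ap (E r) (ap A (X r)))"
  by (intro ap.continuous_on E_cont AX_cont)

lemma EAX_integrable: "{a..b} \<subseteq> {0..T} \<Longrightarrow> (\<lambda>r. ap (E r) (ap A (X r))) integrable_on {a..b}"
  by (rule integrable_continuous_interval) (use EAX_cont continuous_on_subset in blast)

lemma gauge_local:
  assumes e: "e > 0"
  shows "\<exists>h>0. \<forall>s t. 0 \<le> s \<longrightarrow> s \<le> t \<longrightarrow> t \<le> T \<longrightarrow> t - s < h \<longrightarrow>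
     norm ((ap (E t) (X t) - x0 - integral {0..t} (\<lambda>r. ap (E r) (ap A (X r))))
         - (ap (E s) (X s) - x0 - integral {0..s} (\<lambda>r. ap (E r) (ap A (X r)))))
     \<le> e * ((t + U t) - (s + U s))"
proof -
  obtain MX where MX: "MX \<ge> 0" "\<And>r. r \<in> {0..T} \<Longrightarrow> norm (X r) \<le> MX" using cont_bounded[OF Xcont] by blast
  obtain ME where ME: "ME \<ge> 0" "\<And>r. r \<in> {0..T} \<Longrightarrow> norm (E r) \<le> ME" using cont_bounded[OF E_cont] by blast
  define nA where "nA = norm A"
  define nB where "nB = norm B"
  define cr where "cr = exp nB * nB * nB"
  have nA0: "nA \<ge> 0" and nB0: "nB \<ge> 0" and cr0: "cr \<ge> 0" by (auto simp: nA_def nB_def cr_def)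
  define Kc where "Kc = nA * MX + nB * MX + ME * nB + ME * cr * MX"
  have Kc0: "Kc \<ge> 0" using nA0 nB0 cr0 MX ME by (simp add: Kc_def)
  define e1 where "e1 = min 1 (e / (Kc + 1))"
  have e1: "e1 > 0" "e1 \<le> 1" "e1 * Kc \<le> e"
  proof -
    show "e1 > 0" "e1 \<le> 1" using e Kc0 by (auto simp: e1_def)
    have "e1 * Kc \<le> (e / (Kc + 1)) * Kc" using Kc0 by (intro mult_right_mono) (auto simp: e1_def)
    also have "\<dots> \<le> e" using e Kc0 by (simp add: field_simps)
    finally show "e1 * Kc \<le> e" .
  qed
  obtain dE where dE: "dE > 0" "\<And>x y. x \<in> {0..T} \<Longrightarrow> y \<in> {0..T} \<Longrightarrow> \<bar>y - x\<bar> < dE \<Longrightarrow> norm (E y - E x) < e1"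
    using cont_unif[OF E_cont e1(1)] by blast
  obtain dX where dX: "dX > 0" "\<And>x y. x \<in> {0..T} \<Longrightarrow> y \<in> {0..T} \<Longrightarrow> \<bar>y - x\<bar> < dX \<Longrightarrow> norm (X y - X x) < e1"
    using cont_unif[OF Xcont e1(1)] by blast
  obtain dv where dv: "dv > 0" "\<And>x y. x \<in> {0..T} \<Longrightarrow> y \<in> {0..T} \<Longrightarrow> \<bar>y - x\<bar> < dv \<Longrightarrow> norm (v y - v x) < e1"
    using cont_unif[OF v_cont e1(1)] by blast
  define h where "h = min dE (min dX dv)"
  have h: "h > 0" using dE dX dv by (simp add: h_def)
  show ?thesis
  proof (intro exI[of _ h] conjI h allI impI)
    fix s t assume s0: "0 \<le> s" and st: "s \<le> t" and tT: "t \<le> T" and th: "t - s < h"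
    have sub: "{s..t} \<subseteq> {0..T}" using s0 tT by auto
    have sT: "s \<in> {0..T}" and tT': "t \<in> {0..T}" using s0 st tT by auto
    define \<delta> where "\<delta> = v t - v s"
    define c where "c = ap (E s) (ap B (X s))"
    define P where "P = exp (\<delta> *\<^sub>R (- B))"
    have \<delta>U: "\<bar>\<delta>\<bar> \<le> U t - U s" using v_diff_bound[OF s0 st tT] by (simp add: \<delta>_def)
    have \<delta>e: "\<bar>\<delta>\<bar> < e1" using dv(2)[OF sT tT'] th st by (simp add: \<delta>_def h_def)
    have \<delta>int: "\<delta> = integral {s..t} u" using v_diff[OF s0 st tT] by (simp add: \<delta>_def)
    have Et: "E t = E s * P"
    proof -
      have "E t = exp ((v s + \<delta>) *\<^sub>R (- B))" unfolding E_def \<delta>_def by simp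
      also have "\<dots> = E s * P" by (simp only: exp_scaleR_add E_def P_def)
      finally show ?thesis .
    qed
    define g where "g r = ap (E t) (F r) - ap (E r) (ap A (X r)) - u r *\<^sub>R c" for r
    have i1: "(\<lambda>r. ap (E t) (F r)) integrable_on {s..t}"
      using integrable_linear[OF F_integrable[OF sub] ap.bounded_linear_right] by (simp add: o_def)
    have i2: "(\<lambda>r. ap (E r) (ap A (X r))) integrable_on {s..t}" by (rule EAX_integrable[OF sub])
    have i3: "(\<lambda>r. u r *\<^sub>R c) integrable_on {s..t}"
      by (rule integrable_on_scaleR_left[OF u_integrable[OF sub]])
    have ig: "g integrable_on {s..t}" unfolding g_def by (intro integrable_diff i1 i2 i3)
    have intg: "integral {s..t} g = ap (E t) (X t - X s) - integral {s..t} (\<lambda>r. ap (E r) (ap A (X r))) - \<delta> *\<^sub>R c"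
    proof -
      have "integral {s..t} g = integral {s..t} (\<lambda>r. ap (E t) (F r)) - integral {s..t} (\<lambda>r. ap (E r) (ap A (X r)))
          - integral {s..t} (\<lambda>r. u r *\<^sub>R c)"
        unfolding g_def by (simp add: integral_diff i1 i2 i3 integrable_diff)
      moreover have "integral {s..t} (\<lambda>r. ap (E t) (F r)) = ap (E t) (X t - X s)"
        using integral_linear[OF F_integrable[OF sub] ap.bounded_linear_right, of "E t"]
        by (simp add: o_def X_diff[OF s0 st tT])
      moreover have "integral {s..t} (\<lambda>r. u r *\<^sub>R c) = \<delta> *\<^sub>R c"
        using has_integral_scaleR_left[OF integrable_integral[OF u_integrable[OF sub]], of c]
        by (simp add: integral_unique \<delta>int)
      ultimately show ?thesis by simp
    qed
    define b where "b r = e1 * nA * MX + \<bar>u r\<bar> * (e1 * (nB * MX + ME * nB))" for r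
    have ib: "b integrable_on {s..t}"
      unfolding b_def by (intro integrable_add integrable_on_mult_left absu_integrable[OF sub] integrable_const_ivl)
    have gb: "norm (g r) \<le> b r" if r: "r \<in> {s..t}" for r
    proof -
      have rT: "r \<in> {0..T}" using r sub by auto
      have geq: "g r = ap (E t - E r) (ap A (X r)) + u r *\<^sub>R (ap (E t - E s) (ap B (X r)) + ap (E s) (ap B (X r - X s)))"
        by (simp add: g_def F_def c_def ap_diff_left ap.diff_right ap.add_right ap.scaleR_right algebra_simps)
      have n1: "norm (ap (E t - E r) (ap A (X r))) \<le> e1 * nA * MX"
      proof -
        have "norm (ap (E t - E r) (ap A (X r))) \<le> norm (E t - E r) * (nA * norm (X r))"
          using ap_norm[of "E t - E r"] ap_norm[of A "X r"] by (simp add: nA_def) (meson mult_left_mono norm_ge_zero order_trans)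
        also have "\<dots> \<le> e1 * (nA * MX)"
          using dE(2)[OF rT tT'] r th MX(2)[OF rT] nA0 less_imp_le[OF e1(1)] by (intro mult_mono mult_left_mono) (auto simp: h_def)
        finally show ?thesis by (simp add: mult_ac)
      qed
      have n2: "norm (ap (E t - E s) (ap B (X r)) + ap (E s) (ap B (X r - X s))) \<le> e1 * (nB * MX + ME * nB)"
      proof -
        have a: "norm (ap (E t - E s) (ap B (X r))) \<le> e1 * (nB * MX)"
        proof -
          have "norm (ap (E t - E s) (ap B (X r))) \<le> norm (E t - E s) * (nB * norm (X r))"
            using ap_norm[of "E t - E s"] ap_norm[of B "X r"] by (simp add: nB_def) (meson mult_left_mono norm_ge_zero order_trans)
          also have "\<dots> \<le> e1 * (nB * MX)"
            using dE(2)[OF sT tT'] th st MX(2)[OF rT] nB0 less_imp_le[OF e1(1)] by (intro mult_mono mult_left_mono) (auto simp: h_def)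
          finally show ?thesis .
        qed
        have b: "norm (ap (E s) (ap B (X r - X s))) \<le> e1 * (ME * nB)"
        proof -
          have "norm (ap (E s) (ap B (X r - X s))) \<le> norm (E s) * (nB * norm (X r - X s))"
            using ap_norm[of "E s"] ap_norm[of B "X r - X s"] by (simp add: nB_def) (meson mult_left_mono norm_ge_zero order_trans)
          also have "\<dots> \<le> ME * (nB * e1)"
            using dX(2)[OF sT rT] r th ME(2)[OF sT] nB0 ME(1) less_imp_le[OF e1(1)] by (intro mult_mono mult_left_mono) (auto simp: h_def)
          finally show ?thesis by (simp add: mult_ac)
        qed
        show ?thesis using norm_triangle_le[OF add_mono[OF a b]] by (simp add: algebra_simps)
      qed
      have "norm (g r) \<le> e1 * nA * MX + \<bar>u r\<bar> * (e1 * (nB * MX + ME * nB))"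
      proof -
        have "norm (g r) \<le> norm (ap (E t - E r) (ap A (X r)))
            + \<bar>u r\<bar> * norm (ap (E t - E s) (ap B (X r)) + ap (E s) (ap B (X r - X s)))"
          unfolding geq using norm_triangle_ineq by (metis norm_scaleR)
        also have "\<dots> \<le> e1 * nA * MX + \<bar>u r\<bar> * (e1 * (nB * MX + ME * nB))"
          by (intro add_mono n1 mult_left_mono[OF n2 abs_ge_zero])
        finally show ?thesis .
      qed
      then show ?thesis by (simp add: b_def)
    qed
    have intb: "integral {s..t} b = (t - s) * (e1 * nA * MX) + (U t - U s) * (e1 * (nB * MX + ME * nB))"
    proof -
      have "integral {s..t} b = integral {s..t} (\<lambda>r. e1 * nA * MX) + integral {s..t} (\<lambda>r. \<bar>u r\<bar> * (e1 * (nB * MX + ME * nB)))"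
        unfolding b_def by (rule integral_add) (auto intro: integrable_on_mult_left absu_integrable[OF sub])
      also have "integral {s..t} (\<lambda>r. \<bar>u r\<bar> * (e1 * (nB * MX + ME * nB))) = integral {s..t} (\<lambda>r. \<bar>u r\<bar>) * (e1 * (nB * MX + ME * nB))"
        by simp
      finally show ?thesis using U_diff[OF s0 st tT] st by simp
    qed
    have bound1: "norm (integral {s..t} g) \<le> (t - s) * (e1 * nA * MX) + (U t - U s) * (e1 * (nB * MX + ME * nB))"
      using integral_norm_bound_integral[OF ig ib gb] intb by simp
    have sec: "ap (E t - E s) (X s) + \<delta> *\<^sub>R c = ap (E s) (ap (P - 1 - \<delta> *\<^sub>R (- B)) (X s))"
      by (simp add: Et c_def ap_diff_left ap_mult ap.diff_right ap.scaleR_right ap_scaleR_left ap_minus_left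
          ap.minus_right algebra_simps ap_add_left ap.add_right)
    have bound2: "norm (ap (E t - E s) (X s) + \<delta> *\<^sub>R c) \<le> (U t - U s) * (e1 * (ME * cr * MX))"
    proof -
      have "norm (P - 1 - \<delta> *\<^sub>R (- B)) \<le> cr * \<bar>\<delta>\<bar>\<^sup>2"
        using exp_taylor2_bound[of \<delta> "- B"] \<delta>e e1 by (simp add: P_def cr_def nB_def)
      also have "\<dots> \<le> cr * (e1 * (U t - U s))"
      proof -
        have "\<bar>\<delta>\<bar>\<^sup>2 = \<bar>\<delta>\<bar> * \<bar>\<delta>\<bar>" by (simp add: power2_eq_square)
        also have "\<dots> \<le> e1 * (U t - U s)" by (rule mult_mono) (use \<delta>e \<delta>U e1 in auto)
        finally show ?thesis using cr0 by (simp add: mult_left_mono)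
      qed
      finally have np: "norm (P - 1 - \<delta> *\<^sub>R (- B)) \<le> cr * (e1 * (U t - U s))" .
      have "norm (ap (E s) (ap (P - 1 - \<delta> *\<^sub>R (- B)) (X s))) \<le> norm (E s) * (norm (P - 1 - \<delta> *\<^sub>R (- B)) * norm (X s))"
        using ap_norm[of "E s"] ap_norm[of "P - 1 - \<delta> *\<^sub>R (- B)" "X s"]
        by (meson mult_left_mono norm_ge_zero order_trans)
      also have "\<dots> \<le> ME * ((cr * (e1 * (U t - U s))) * MX)"
        using ME MX np sT cr0 e1 U_mono[OF s0 st tT] by (intro mult_mono) (auto intro: mult_nonneg_nonneg)
      finally show ?thesis unfolding sec by (simp add: mult_ac)
    qed
    have diff: "(ap (E t) (X t) - x0 - integral {0..t} (\<lambda>r. ap (E r) (ap A (X r))))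
         - (ap (E s) (X s) - x0 - integral {0..s} (\<lambda>r. ap (E r) (ap A (X r))))
       = integral {s..t} g + (ap (E t - E s) (X s) + \<delta> *\<^sub>R c)"
    proof -
      have "integral {0..t} (\<lambda>r. ap (E r) (ap A (X r))) = integral {0..s} (\<lambda>r. ap (E r) (ap A (X r)))
          + integral {s..t} (\<lambda>r. ap (E r) (ap A (X r)))"
        using Henstock_Kurzweil_Integration.integral_combine[OF s0 st EAX_integrable[of 0 t]] tT by simp
      then show ?thesis by (simp add: intg ap_diff_left ap.diff_right algebra_simps)
    qed
    have "norm (integral {s..t} g + (ap (E t - E s) (X s) + \<delta> *\<^sub>R c))
        \<le> (t - s) * (e1 * nA * MX) + (U t - U s) * (e1 * (nB * MX + ME * nB)) + (U t - U s) * (e1 * (ME * cr * MX))"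
      using norm_triangle_le[OF add_mono[OF bound1 bound2]] by simp
    also have "\<dots> \<le> e1 * Kc * ((t + U t) - (s + U s))"
    proof -
      have U0': "0 \<le> U t - U s" using U_mono[OF s0 st tT] by simp
      have "(t - s) * (e1 * nA * MX) \<le> (t - s) * (e1 * Kc)"
        using st e1 nB0 MX ME cr0 by (intro mult_left_mono) (auto simp: Kc_def intro!: mult_left_mono)
      moreover have "(U t - U s) * (e1 * (nB * MX + ME * nB)) + (U t - U s) * (e1 * (ME * cr * MX)) \<le> (U t - U s) * (e1 * Kc)"
        using U0' e1 nA0 MX by (simp add: Kc_def algebra_simps mult_left_mono)
      ultimately show ?thesis by (simp add: algebra_simps)
    qed
    also have "\<dots> \<le> e * ((t + U t) - (s + U s))"
      using e1(3) U_mono[OF s0 st tT] st by (intro mult_right_mono) auto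
    finally show "norm ((ap (E t) (X t) - x0 - integral {0..t} (\<lambda>r. ap (E r) (ap A (X r))))
         - (ap (E s) (X s) - x0 - integral {0..s} (\<lambda>r. ap (E r) (ap A (X r)))))
     \<le> e * ((t + U t) - (s + U s))" unfolding diff .
  qed
qed

end

context run
begin

lemma gauge:
  assumes t: "t \<in> {0..T}"
  shows "ap (E t) (X t) = x0 + integral {0..t} (\<lambda>r. ap (E r) (ap A (X r)))"
proof -
  define \<Psi> where "\<Psi> \<tau> = ap (E \<tau>) (X \<tau>) - x0 - integral {0..\<tau>} (\<lambda>r. ap (E r) (ap A (X r)))" for \<tau>
  have "\<Psi> t = 0"
  proof (rule local_to_global[where G = "\<lambda>\<tau>. \<tau> + U \<tau>"])
    show "0 \<le> t" using t by simp
    show "\<Psi> 0 = 0" by (simp add: \<Psi>_def E0 X0)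
    show "\<And>s \<tau>. 0 \<le> s \<Longrightarrow> s \<le> \<tau> \<Longrightarrow> \<tau> \<le> t \<Longrightarrow> s + U s \<le> \<tau> + U \<tau>"
      using U_mono t by (auto intro: add_mono)
    fix e :: real assume "e > 0"
    from gauge_local[OF this] obtain h where h: "h > 0" and hh: "\<forall>s \<tau>. 0 \<le> s \<longrightarrow> s \<le> \<tau> \<longrightarrow> \<tau> \<le> T \<longrightarrow> \<tau> - s < h \<longrightarrow>
     norm ((ap (E \<tau>) (X \<tau>) - x0 - integral {0..\<tau>} (\<lambda>r. ap (E r) (ap A (X r))))
         - (ap (E s) (X s) - x0 - integral {0..s} (\<lambda>r. ap (E r) (ap A (X r)))))
     \<le> e * ((\<tau> + U \<tau>) - (s + U s))" by blast
    show "\<exists>h>0. \<forall>s \<tau>. 0 \<le> s \<longrightarrow> s \<le> \<tau> \<longrightarrow> \<tau> \<le> t \<longrightarrow> \<tau> - s < h \<longrightarrow>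
          norm (\<Psi> \<tau> - \<Psi> s) \<le> e * (\<tau> + U \<tau> - (s + U s))"
    proof (intro exI[of _ h] conjI h allI impI)
      fix s \<tau> assume a: "0 \<le> s" "s \<le> \<tau>" "\<tau> \<le> t" "\<tau> - s < h"
      have "\<tau> \<le> T" using a(3) t by simp
      then show "norm (\<Psi> \<tau> - \<Psi> s) \<le> e * (\<tau> + U \<tau> - (s + U s))"
        using hh a unfolding \<Psi>_def by blast
    qed
  qed
  then have "ap (E t) (X t) - x0 = integral {0..t} (\<lambda>r. ap (E r) (ap A (X r)))" by (simp add: \<Psi>_def)
  then show ?thesis by (metis add.commute diff_add_cancel)
qed

definition W where "W t = ap (E t) (X t)" for t
definition Ei where "Ei t = exp (v t *\<^sub>R B)" for t

lemma Ei_E: "Ei t * E t = 1"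
  unfolding Ei_def E_def using exp_minus_inverse[of "v t *\<^sub>R B"] by simp

lemma X_W: "X t = ap (Ei t) (W t)"
  unfolding W_def ap_mult[symmetric] Ei_E by simp

lemma W_deriv:
  assumes "t \<in> {0..T}"
  shows "(W has_vector_derivative ap (E t) (ap A (X t))) (at t within {0..T})"
proof -
  have "((\<lambda>\<tau>. x0 + integral {0..\<tau>} (\<lambda>r. ap (E r) (ap A (X r)))) has_vector_derivative ap (E t) (ap A (X t))) (at t within {0..T})"
    using integral_has_vector_derivative[OF EAX_cont assms] by (auto intro!: derivative_eq_intros)
  then show ?thesis
    by (rule has_vector_derivative_transform[OF assms, rotated]) (simp add: W_def gauge)
qed

lemma W_cont: "continuous_on {0..T} W"
  by (rule continuous_on_vector_derivative) (rule W_deriv)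

lemma W0: "W 0 = x0" by (simp add: W_def E0 X0)

lemma EAX_Phi: "ap (E t) (ap A (X t)) = ap (Phi B A (v t)) (W t)"
proof -
  have "ap (Phi B A (v t)) (W t) = ap (E t * A * Ei t) (W t)"
    by (simp add: Phi_def E_def Ei_def)
  also have "\<dots> = ap (E t) (ap A (X t))" by (simp add: ap_mult X_W)
  finally show ?thesis by simp
qed

lemma x0_norm: "norm x0 = 1"
proof -
  have "\<phi> i1 \<bullet> \<phi> i1 = 1" using orth by simp
  then have "norm (\<phi> i1) = 1" by (simp add: norm_eq_sqrt_inner)
  then show ?thesis by (simp add: x0_def norm_cvec)
qed

lemma W_norm: "t \<in> {0..T} \<Longrightarrow> norm (W t) = 1"
proof -
  assume t: "t \<in> {0..T}"
  have d: "((\<lambda>\<tau>. W \<tau> \<bullet> W \<tau>) has_vector_derivative 0) (at \<tau> within {0..T})" if "\<tau> \<in> {0..T}" for \<tau>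
  proof -
    have "((\<lambda>\<tau>. W \<tau> \<bullet> W \<tau>) has_vector_derivative
       (W \<tau> \<bullet> ap (E \<tau>) (ap A (X \<tau>)) + ap (E \<tau>) (ap A (X \<tau>)) \<bullet> W \<tau>)) (at \<tau> within {0..T})"
      by (rule bounded_bilinear.has_vector_derivative[OF bounded_bilinear_inner W_deriv[OF that] W_deriv[OF that]])
    moreover have "ap (E \<tau>) (ap A (X \<tau>)) \<bullet> W \<tau> = 0"
    proof -
      have sk: "skew (- B)" using skewB by (simp add: skew_def ap_minus_left)
      have "ap (E \<tau>) (ap A (X \<tau>)) \<bullet> W \<tau> = ap A (X \<tau>) \<bullet> ap (exp ((- v \<tau>) *\<^sub>R (- B))) (W \<tau>)"
        unfolding E_def by (rule skew_exp_adj[OF sk])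
      also have "\<dots> = ap A (X \<tau>) \<bullet> X \<tau>" by (simp add: X_W Ei_def)
      also have "\<dots> = 0" by (rule skew_self[OF skewA])
      finally show ?thesis .
    qed
    ultimately show ?thesis by (simp add: inner_commute)
  qed
  obtain c where "\<And>x. x \<in> {0..T} \<Longrightarrow> W x \<bullet> W x = c"
    using has_vector_derivative_zero_constant[of "{0..T}" "\<lambda>\<tau>. W \<tau> \<bullet> W \<tau>"] d by auto
  then have "W t \<bullet> W t = W 0 \<bullet> W 0" using t Tpos by (metis atLeastAtMost_iff less_eq_real_def order_refl)
  then show ?thesis using x0_norm W0 by (simp add: norm_eq_sqrt_inner)
qed

lemma X_norm: "t \<in> {0..T} \<Longrightarrow> norm (X t) = 1"
  using W_norm skew_exp_norm[OF skewB] by (simp add: X_W Ei_def)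

definition Gop where "Gop z = Phi B A z - A" for z
definition Y where "Y t = ap (exp (t *\<^sub>R (- A))) (W t)" for t

lemma Y_deriv:
  assumes "t \<in> {0..T}"
  shows "(Y has_vector_derivative ap (exp (t *\<^sub>R (- A))) (ap (Gop (v t)) (W t))) (at t within {0..T})"
proof -
  have "(Y has_vector_derivative (ap (exp (t *\<^sub>R (- A))) (ap (E t) (ap A (X t))) + ap (exp (t *\<^sub>R (- A)) * (- A)) (W t))) (at t within {0..T})"
    unfolding Y_def by (rule ap.has_vector_derivative[OF exp_deriv W_deriv[OF assms]])
  moreover have "ap (exp (t *\<^sub>R (- A))) (ap (E t) (ap A (X t))) + ap (exp (t *\<^sub>R (- A)) * (- A)) (W t)
      = ap (exp (t *\<^sub>R (- A))) (ap (Gop (v t)) (W t))"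
    by (simp add: EAX_Phi Gop_def ap_mult ap_diff_left ap_minus_left ap.diff_right ap.minus_right)
  ultimately show ?thesis by simp
qed

lemma Y0: "Y 0 = x0" by (simp add: Y_def W0)

lemma Y_int:
  assumes "t \<in> {0..T}"
  shows "Y t = x0 + integral {0..t} (\<lambda>r. ap (exp (r *\<^sub>R (- A))) (ap (Gop (v r)) (W r)))"
proof -
  have "((\<lambda>r. ap (exp (r *\<^sub>R (- A))) (ap (Gop (v r)) (W r))) has_integral (Y t - Y 0)) {0..t}"
  proof (rule fundamental_theorem_of_calculus)
    show "0 \<le> t" using assms by simp
    fix x assume "x \<in> {0..t}"
    then show "(Y has_vector_derivative ap (exp (x *\<^sub>R (- A))) (ap (Gop (v x)) (W x))) (at x within {0..t})"
      using assms by (intro has_vector_derivative_within_subset[OF Y_deriv]) auto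
  qed
  then show ?thesis using Y0 by (simp add: integral_unique)
qed

lemma Y_integrable:
  assumes "t \<in> {0..T}"
  shows "(\<lambda>r. ap (exp (r *\<^sub>R (- A))) (ap (Gop (v r)) (W r))) integrable_on {0..t}"
proof -
  have "((\<lambda>r. ap (exp (r *\<^sub>R (- A))) (ap (Gop (v r)) (W r))) has_integral (Y t - Y 0)) {0..t}"
  proof (rule fundamental_theorem_of_calculus)
    show "0 \<le> t" using assms by simp
    fix x assume "x \<in> {0..t}"
    then show "(Y has_vector_derivative ap (exp (x *\<^sub>R (- A))) (ap (Gop (v x)) (W x))) (at x within {0..t})"
      using assms by (intro has_vector_derivative_within_subset[OF Y_deriv]) auto
  qed
  then show ?thesis by (auto simp: integrable_on_def)
qed

lemma W_Y: "W t = ap (exp (t *\<^sub>R A)) (Y t)"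
proof -
  have "exp (t *\<^sub>R A) * exp (t *\<^sub>R (- A)) = 1"
    using exp_minus_inverse[of "t *\<^sub>R A"] by simp
  then show ?thesis by (simp add: Y_def ap_mult[symmetric])
qed

end

lemma cos_ge_1_minus_abs: "cos (x::real) \<ge> 1 - \<bar>x\<bar>"
proof -
  define w where "w = sin (x / 2)"
  have c: "cos x = 1 - 2 * w\<^sup>2" using cos_double_sin[of "x/2"] by (simp add: w_def)
  have "w\<^sup>2 = \<bar>w\<bar> * \<bar>w\<bar>" by (simp add: power2_eq_square)
  also have "\<dots> \<le> 1 * \<bar>w\<bar>" using abs_sin_le_one[of "x/2"] by (intro mult_right_mono) (auto simp: w_def)
  finally have a: "w\<^sup>2 \<le> \<bar>w\<bar>" by simp
  have b: "\<bar>w\<bar> \<le> \<bar>x\<bar> / 2" using abs_sin_x_le_abs_x[of "x/2"] by (simp add: w_def)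
  show ?thesis using a b c by linarith
qed

context setting
begin

definition nB where "nB = norm B"
definition k1 where "k1 = exp nB * exp nB * norm C1"
definition k3 where "k3 = exp nB * exp nB * norm (cm B C2)"
definition cr where "cr = exp nB * nB * nB"
definition beta where "beta = norm (H1 *v \<phi> i1)"
definition Lam where "Lam = \<bar>lam K - lam i1\<bar>"

lemma consts_nonneg: "nB \<ge> 0" "k1 \<ge> 0" "k3 \<ge> 0" "cr \<ge> 0" "beta \<ge> 0" "Lam \<ge> 0"
  by (auto simp: nB_def k1_def k3_def cr_def beta_def Lam_def)

definition Lc where "Lc = k1 * (1 + nB)"
definition Cst where "Cst = (cr + 1/2) * 8 / beta\<^sup>2"
definition M1 where "M1 = k1 * k1 + (nB * k1)\<^sup>2 / 2 + Cst * Lc\<^sup>2"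

lemma beta_pos: "beta > 0"
proof (rule ccontr)
  assume "\<not> beta > 0"
  then have z: "H1 *v \<phi> i1 = 0" using consts_nonneg by (simp add: beta_def)
  have "comm H1 (comm H0 H1) *v \<phi> i1 = 0"
    by (simp add: comm_def matrix_vector_mult_diff_rdistrib matrix_vector_mul_assoc[symmetric] z eig
        matrix_vector_mult_scaleR)
  then show False using hK1 by simp
qed

lemma more_nonneg: "Lc \<ge> 0" "Cst \<ge> 0" "M1 \<ge> 0"
  using consts_nonneg by (auto simp: Lc_def Cst_def M1_def)

end

context run
begin

lemma Gop1: "\<bar>z\<bar> \<le> 1 \<Longrightarrow> norm (Gop z) \<le> k1 * \<bar>z\<bar>"
  using Phi_taylor1[of z B A] by (simp add: Gop_def k1_def nB_def C1_def)

lemma Gop3: "\<bar>z\<bar> \<le> 1 \<Longrightarrow> norm (Gop z - z *\<^sub>R C1 - (z\<^sup>2 / 2) *\<^sub>R C2) \<le> k3 * \<bar>z\<bar> ^ 3"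
  using Phi_taylor3[of z B A] by (simp add: Gop_def k3_def nB_def C1_def C2_def)

end

locale small = run H0 H1 \<phi> lam i1 K T u X
  for H0 H1 :: "real^'n^'n" and \<phi> lam i1 K T u X +
  fixes \<eta> :: real
  assumes eta1: "\<eta> \<le> 1"
    and vsm: "\<forall>t\<in>{0..T}. \<bar>integral {0..t} u\<bar> \<le> \<eta>"
begin

lemma vle: "t \<in> {0..T} \<Longrightarrow> \<bar>v t\<bar> \<le> \<eta>"
  using vsm by (simp add: v_def)

lemma vle1: "t \<in> {0..T} \<Longrightarrow> \<bar>v t\<bar> \<le> 1"
  using vle eta1 by force

lemma eta0: "0 \<le> \<eta>"
  using vle[of 0] Tpos by (auto intro: order_trans[OF abs_ge_zero])

definition V1 where "V1 = integral {0..T} (\<lambda>r. \<bar>v r\<bar>)"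
definition Iv2 where "Iv2 = integral {0..T} (\<lambda>r. (v r)\<^sup>2)"

lemma absv_cont: "continuous_on {0..T} (\<lambda>r. \<bar>v r\<bar>)"
  by (intro continuous_intros v_cont)

lemma absv_int: "{a..b} \<subseteq> {0..T} \<Longrightarrow> (\<lambda>r. \<bar>v r\<bar>) integrable_on {a..b}"
  by (rule integrable_continuous_interval) (use absv_cont continuous_on_subset in blast)

lemma v2_int: "(\<lambda>r. (v r)\<^sup>2) integrable_on {0..T}"
  by (rule integrable_continuous_interval) (intro continuous_intros v_cont)

lemma V1_nonneg: "0 \<le> V1"
  unfolding V1_def by (rule integral_nonneg[OF absv_int]) auto

lemma Iv2_nonneg: "0 \<le> Iv2"
  unfolding Iv2_def by (rule integral_nonneg[OF v2_int]) auto

lemma Ydiff: "t \<in> {0..T} \<Longrightarrow> norm (Y t - x0) \<le> k1 * V1"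
proof -
  assume t: "t \<in> {0..T}"
  have sk: "skew (- A)" using skewA by (simp add: skew_def ap_minus_left)
  have "norm (Y t - x0) = norm (integral {0..t} (\<lambda>r. ap (exp (r *\<^sub>R (- A))) (ap (Gop (v r)) (W r))))"
    using Y_int[OF t] by simp
  also have "\<dots> \<le> integral {0..t} (\<lambda>r. k1 * \<bar>v r\<bar>)"
  proof (rule integral_norm_bound_integral[OF Y_integrable[OF t]])
    show "(\<lambda>r. k1 * \<bar>v r\<bar>) integrable_on {0..t}" using absv_int[of 0 t] t by (auto intro: integrable_on_mult_right)
    fix r assume r: "r \<in> {0..t}"
    then have rT: "r \<in> {0..T}" using t by auto
    have "norm (ap (exp (r *\<^sub>R (- A))) (ap (Gop (v r)) (W r))) = norm (ap (Gop (v r)) (W r))"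
      by (rule skew_exp_norm[OF sk])
    also have "\<dots> \<le> norm (Gop (v r)) * norm (W r)" by (rule ap_norm)
    also have "\<dots> \<le> k1 * \<bar>v r\<bar>" using Gop1[OF vle1[OF rT]] W_norm[OF rT] by simp
    finally show "norm (ap (exp (r *\<^sub>R (- A))) (ap (Gop (v r)) (W r))) \<le> k1 * \<bar>v r\<bar>" .
  qed
  also have "\<dots> \<le> integral {0..T} (\<lambda>r. k1 * \<bar>v r\<bar>)"
    by (rule integral_subset_le) (use t absv_int[of 0 t] absv_int[of 0 T] consts_nonneg in \<open>auto intro: integrable_on_mult_right\<close>)
  also have "\<dots> = k1 * V1" by (simp add: V1_def)
  finally show ?thesis .
qed

definition X1 where "X1 t = cis (- lam i1 * t) *s x0" for t

lemma X1_exp: "X1 t = ap (exp (t *\<^sub>R A)) x0"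
  using expA_phi[of t 1 i1] by (simp add: X1_def x0_def)

lemma W_X1: "t \<in> {0..T} \<Longrightarrow> norm (W t - X1 t) \<le> k1 * V1"
proof -
  assume t: "t \<in> {0..T}"
  have "W t - X1 t = ap (exp (t *\<^sub>R A)) (Y t - x0)"
    by (simp add: W_Y X1_exp ap.diff_right)
  then have "norm (W t - X1 t) = norm (Y t - x0)" by (simp add: skew_exp_norm[OF skewA])
  then show ?thesis using Ydiff[OF t] by simp
qed

lemma CS: "V1\<^sup>2 \<le> T * Iv2"
proof -
  define m where "m = V1 / T"
  have i1: "(\<lambda>r. (\<bar>v r\<bar> - m)\<^sup>2) integrable_on {0..T}"
    by (rule integrable_continuous_interval) (intro continuous_intros v_cont)
  have "0 \<le> integral {0..T} (\<lambda>r. (\<bar>v r\<bar> - m)\<^sup>2)" by (rule integral_nonneg[OF i1]) auto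
  also have "integral {0..T} (\<lambda>r. (\<bar>v r\<bar> - m)\<^sup>2) = integral {0..T} (\<lambda>r. (v r)\<^sup>2 - (2 * m) * \<bar>v r\<bar> + m\<^sup>2)"
    by (rule integral_cong) (simp add: power2_eq_square algebra_simps)
  also have "\<dots> = Iv2 - (2 * m) * V1 + m\<^sup>2 * T"
  proof -
    have a: "(\<lambda>r. (v r)\<^sup>2 - (2 * m) * \<bar>v r\<bar>) integrable_on {0..T}"
      by (intro integrable_diff v2_int integrable_on_mult_right absv_int) auto
    have "integral {0..T} (\<lambda>r. (v r)\<^sup>2 - (2 * m) * \<bar>v r\<bar> + m\<^sup>2)
        = integral {0..T} (\<lambda>r. (v r)\<^sup>2 - (2 * m) * \<bar>v r\<bar>) + integral {0..T} (\<lambda>r. m\<^sup>2)"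
      by (rule integral_add[OF a]) auto
    also have "integral {0..T} (\<lambda>r. (v r)\<^sup>2 - (2 * m) * \<bar>v r\<bar>) = Iv2 - (2 * m) * V1"
      using integral_diff[OF v2_int integrable_on_mult_right[OF absv_int[of 0 T]], of "2 * m"]
      by (simp add: Iv2_def V1_def)
    finally show ?thesis using Tpos by simp
  qed
  finally have "0 \<le> Iv2 - (2 * m) * V1 + m\<^sup>2 * T" .
  then have "0 \<le> T * Iv2 - V1\<^sup>2" using Tpos by (simp add: m_def field_simps power2_eq_square)
  then show ?thesis by simp
qed

definition what where "what = \<i> *s (cis (- lam i1 * T) *s cvec (\<phi> K))"
definition D where "D = norm (X T - X1 T)"

lemma phiK_norm: "norm (cvec (\<phi> K)) = 1"
proof -
  have "\<phi> K \<bullet> \<phi> K = 1" using orth by simp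
  then have "norm (\<phi> K) = 1" by (simp add: norm_eq_sqrt_inner)
  then show ?thesis by (simp add: norm_cvec)
qed

lemma norm_scale_gen: "norm (c *s (x::complex^'n)) = norm c * norm x"
  by (simp add: norm_vec_def norm_mult L2_set_right_distrib)

lemma what_norm: "norm what = 1"
  by (simp add: what_def norm_scale_gen norm_mult phiK_norm)

lemma what_eq: "what = (\<i> * cis (- lam i1 * T)) *s cvec (\<phi> K)"
  by (simp add: what_def scale_scale)

lemma B_perp: "ap B (a *s x0) \<bullet> (b *s cvec (\<phi> K)) = 0"
  by (simp add: inner_herm clinB herm_scale_left herm_scale_right x0_def herm_B1)

lemma clinC1: "ap C1 (a *s x) = a *s ap C1 x"
  by (simp add: apC1 cmat_scale)
lemma clinC2: "ap C2 (a *s x) = a *s ap C2 x"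
  by (simp add: apC2 cmat_scale scale_scale mult.commute)

lemma C1_perp: "ap C1 (a *s x0) \<bullet> (b *s cvec (\<phi> K)) = 0"
  by (simp add: inner_herm clinC1 herm_scale_left herm_scale_right x0_def herm_C1)

lemma C2_val: "ap C2 (a *s x0) \<bullet> (b *s cvec (\<phi> K)) = Re (a * cnj b * (- \<i> * complex_of_real aK))"
  by (simp add: inner_herm clinC2 herm_scale_left herm_scale_right x0_def herm_C2 mult_ac)

lemma beta_eq: "norm (ap B (X1 t)) = beta"
  by (simp add: X1_def clinB apB x0_def cmat_scale cmat_cvec norm_scale_gen norm_mult norm_cvec beta_def)

lemma vT: "\<bar>v T\<bar> \<le> \<eta>" using vle Tpos by simp

lemma X_decomp: "X T - X1 T = (W T - X1 T) + v T *\<^sub>R ap B (X1 T) + v T *\<^sub>R ap B (W T - X1 T)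
    + ap (Ei T - 1 - v T *\<^sub>R B) (W T)"
  by (simp add: X_W ap_diff_left ap_add_left ap_scaleR_left ap.diff_right ap.scaleR_right algebra_simps)

lemma rho_bound: "norm (Ei T - 1 - v T *\<^sub>R B) \<le> cr * (v T)\<^sup>2"
  using exp_taylor2_bound[of "v T" B] vle1[of T] Tpos by (simp add: Ei_def cr_def nB_def)

lemma WTX1: "norm (W T - X1 T) \<le> k1 * V1" using W_X1 Tpos by simp

lemma vT_bound:
  assumes small_eta: "cr * \<eta> \<le> beta / 2"
  shows "\<bar>v T\<bar> * (beta / 2) \<le> D + k1 * (1 + nB) * V1"
proof -
  have eq: "v T *\<^sub>R ap B (X1 T) = (X T - X1 T) - (W T - X1 T) - v T *\<^sub>R ap B (W T - X1 T)
      - ap (Ei T - 1 - v T *\<^sub>R B) (W T)"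
    using X_decomp by (simp add: algebra_simps)
  have "\<bar>v T\<bar> * beta = norm (v T *\<^sub>R ap B (X1 T))" by (simp add: beta_eq)
  also have "\<dots> \<le> D + k1 * V1 + \<bar>v T\<bar> * (nB * (k1 * V1)) + cr * (v T)\<^sup>2"
  proof -
    have n3: "norm (v T *\<^sub>R ap B (W T - X1 T)) \<le> \<bar>v T\<bar> * (nB * (k1 * V1))"
    proof -
      have "norm (ap B (W T - X1 T)) \<le> nB * norm (W T - X1 T)" using ap_norm by (simp add: nB_def)
      also have "\<dots> \<le> nB * (k1 * V1)" using WTX1 consts_nonneg by (simp add: mult_left_mono)
      finally show ?thesis by (simp add: mult_left_mono)
    qed
    have n4: "norm (ap (Ei T - 1 - v T *\<^sub>R B) (W T)) \<le> cr * (v T)\<^sup>2"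
      using ap_norm[of "Ei T - 1 - v T *\<^sub>R B" "W T"] rho_bound W_norm[of T] Tpos by simp
    show ?thesis unfolding eq D_def
      using norm_triangle_ineq4 norm_triangle_ineq WTX1 n3 n4
      by (smt (verit, ccfv_SIG) norm_triangle_ineq4)
  qed
  finally have a: "\<bar>v T\<bar> * beta \<le> D + k1 * V1 + \<bar>v T\<bar> * (nB * (k1 * V1)) + cr * (v T)\<^sup>2" .
  have b: "\<bar>v T\<bar> * (nB * (k1 * V1)) \<le> nB * (k1 * V1)"
    using vle1[of T] Tpos consts_nonneg V1_nonneg by (simp add: mult_left_le_one_le)
  have c: "cr * (v T)\<^sup>2 \<le> \<bar>v T\<bar> * (beta / 2)"
  proof -
    have "cr * (v T)\<^sup>2 = (cr * \<bar>v T\<bar>) * \<bar>v T\<bar>" by (simp add: power2_eq_square)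
    also have "\<dots> \<le> (cr * \<eta>) * \<bar>v T\<bar>" using vT consts_nonneg by (intro mult_right_mono mult_left_mono) auto
    also have "\<dots> \<le> (beta / 2) * \<bar>v T\<bar>" using small_eta by (intro mult_right_mono) auto
    finally show ?thesis by (simp add: mult.commute)
  qed
  show ?thesis using a b c by (simp add: algebra_simps)
qed

definition c1 where "c1 = \<i> * cis (- lam i1 * T) * cis (- lam K * (- T))"
definition w1 where "w1 = ap (exp ((- T) *\<^sub>R A)) what"
definition w2 where "w2 r = (c1 * cis (- lam K * r)) *s cvec (\<phi> K)" for r
definition theta where "theta r = (lam K - lam i1) * (r - T)" for r
definition fr where "fr r = ap (exp (r *\<^sub>R (- A))) (ap (Gop (v r)) (W r))" for r

lemma w1_eq: "w1 = c1 *s cvec (\<phi> K)"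
  unfolding w1_def what_eq expA_phi c1_def by simp

lemma WT_inner: "W T \<bullet> what = Y T \<bullet> w1"
  by (simp add: W_Y skew_exp_adjA w1_def)

lemma x0_w1: "x0 \<bullet> w1 = 0"
proof (cases "K = i1")
  case True
  have "c1 = \<i>" unfolding c1_def using True by (simp add: mult.assoc cis_mult)
  moreover have "\<phi> i1 \<bullet> \<phi> K = 1" using orth True by simp
  moreover have "x0 \<bullet> w1 = Re (cnj c1 * complex_of_real (\<phi> i1 \<bullet> \<phi> K))"
    by (simp add: inner_herm w1_eq herm_scale_right x0_def herm_cvec)
  ultimately show ?thesis by simp
next
  case False
  then have "\<phi> i1 \<bullet> \<phi> K = 0" using orth by metis
  then show ?thesis by (simp add: inner_herm w1_eq herm_scale_right x0_def herm_cvec)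
qed

lemma fr_int: "fr integrable_on {0..T}"
  using Y_integrable[of T] Tpos unfolding fr_def[abs_def] by simp

lemma frw_int: "(\<lambda>r. fr r \<bullet> w1) integrable_on {0..T}"
  using integrable_linear[OF fr_int bounded_linear_inner_left[of w1]] by (simp add: o_def)

lemma YT_w1: "Y T \<bullet> w1 = integral {0..T} (\<lambda>r. fr r \<bullet> w1)"
proof -
  have "Y T \<bullet> w1 = x0 \<bullet> w1 + integral {0..T} fr \<bullet> w1"
    using Y_int[of T] Tpos unfolding fr_def[abs_def] by (simp add: inner_add_left)
  also have "integral {0..T} fr \<bullet> w1 = integral {0..T} (\<lambda>r. fr r \<bullet> w1)"
    using integral_linear[OF fr_int bounded_linear_inner_left[of w1]] by (simp add: o_def)
  finally show ?thesis by (simp add: x0_w1)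
qed

lemma fr_w1: "fr r \<bullet> w1 = ap (Gop (v r)) (W r) \<bullet> w2 r"
proof -
  have sk: "skew (- A)" using skewA by (simp add: skew_def ap_minus_left)
  have "fr r \<bullet> w1 = ap (Gop (v r)) (W r) \<bullet> ap (exp ((- r) *\<^sub>R (- A))) w1"
    unfolding fr_def by (rule skew_exp_adj[OF sk])
  also have "ap (exp ((- r) *\<^sub>R (- A))) w1 = w2 r"
    using expA_phi[of r c1 K] by (simp add: w1_eq w2_def)
  finally show ?thesis .
qed

lemma cis_prod: "cis a * cnj (\<i> * cis b * cis c * cis d) = - \<i> * cis (a - b - c - d)"
proof -
  have "cnj (\<i> * cis b * cis c * cis d) = - \<i> * cis (- b) * cis (- c) * cis (- d)"
    by (simp add: cis_cnj)
  moreover have "cis a * cis (- b) * cis (- c) * cis (- d) = cis (a - b - c - d)"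
    by (simp add: cis_mult)
  ultimately show ?thesis by (simp add: mult_ac)
qed

lemma C2_term: "ap C2 (X1 r) \<bullet> w2 r = - aK * cos (theta r)"
proof -
  have "cis (- lam i1 * r) * cnj (c1 * cis (- lam K * r)) = - \<i> * cis (theta r)"
    unfolding c1_def using cis_prod[of "- lam i1 * r" "- lam i1 * T" "- lam K * (- T)" "- lam K * r"]
    by (simp add: theta_def algebra_simps)
  then have h: "cis (- lam i1 * r) * cnj (c1 * cis (- lam K * r)) * (- \<i> * complex_of_real aK) = - complex_of_real aK * cis (theta r)"
    by (simp add: algebra_simps)
  show ?thesis
    unfolding X1_def w2_def C2_val h by simp
qed

lemma C1_term: "ap C1 (X1 r) \<bullet> w2 r = 0"
  by (simp add: X1_def w2_def C1_perp)

lemma X1_norm: "norm (X1 r) = 1"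
  by (simp add: X1_def norm_scale_gen x0_norm)

lemma w2_norm: "norm (w2 r) = 1"
proof -
  have "norm c1 = 1" by (simp add: c1_def norm_mult)
  then show ?thesis by (simp add: w2_def norm_scale_gen norm_mult phiK_norm)
qed

definition e where "e r = fr r \<bullet> w1 + (aK / 2) * (v r)\<^sup>2 * cos (theta r)" for r

lemma e_bound: "r \<in> {0..T} \<Longrightarrow> \<bar>e r\<bar> \<le> k3 * \<eta> * (v r)\<^sup>2 + k1 * k1 * V1 * \<bar>v r\<bar>"
proof -
  assume r: "r \<in> {0..T}"
  define z where "z = v r"
  have z1: "\<bar>z\<bar> \<le> 1" using vle1[OF r] by (simp add: z_def)
  define R where "R = Gop z - z *\<^sub>R C1 - (z\<^sup>2 / 2) *\<^sub>R C2"
  have dec: "ap (Gop z) (W r) = z *\<^sub>R ap C1 (X1 r) + (z\<^sup>2 / 2) *\<^sub>R ap C2 (X1 r) + ap R (X1 r) + ap (Gop z) (W r - X1 r)"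
    by (simp add: R_def ap_diff_left ap_add_left ap_scaleR_left ap.diff_right algebra_simps)
  have "e r = ap R (X1 r) \<bullet> w2 r + ap (Gop z) (W r - X1 r) \<bullet> w2 r"
    unfolding e_def fr_w1 z_def[symmetric] dec
    by (simp add: inner_add_left C1_term C2_term algebra_simps)
  moreover have "\<bar>ap R (X1 r) \<bullet> w2 r\<bar> \<le> k3 * \<eta> * (v r)\<^sup>2"
  proof -
    have "\<bar>ap R (X1 r) \<bullet> w2 r\<bar> \<le> norm (ap R (X1 r)) * norm (w2 r)" by (rule Cauchy_Schwarz_ineq2)
    also have "\<dots> \<le> norm R" using ap_norm[of R "X1 r"] by (simp add: X1_norm w2_norm)
    also have "\<dots> \<le> k3 * \<bar>z\<bar> ^ 3" using Gop3[OF z1] by (simp add: R_def)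
    also have "\<dots> = k3 * \<bar>z\<bar> * (v r)\<^sup>2" by (simp add: z_def power2_eq_square power3_eq_cube abs_mult_self_eq)
    also have "\<dots> \<le> k3 * \<eta> * (v r)\<^sup>2"
      using vle[OF r] consts_nonneg by (intro mult_right_mono mult_left_mono) (auto simp: z_def)
    finally show ?thesis .
  qed
  moreover have "\<bar>ap (Gop z) (W r - X1 r) \<bullet> w2 r\<bar> \<le> k1 * k1 * V1 * \<bar>v r\<bar>"
  proof -
    have "\<bar>ap (Gop z) (W r - X1 r) \<bullet> w2 r\<bar> \<le> norm (ap (Gop z) (W r - X1 r)) * norm (w2 r)" by (rule Cauchy_Schwarz_ineq2)
    also have "\<dots> \<le> norm (Gop z) * norm (W r - X1 r)" using ap_norm by (simp add: w2_norm)
    also have "\<dots> \<le> (k1 * \<bar>z\<bar>) * (k1 * V1)"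
      using Gop1[OF z1] W_X1[OF r] consts_nonneg by (intro mult_mono) auto
    finally show ?thesis by (simp add: z_def mult_ac)
  qed
  ultimately show ?thesis by linarith
qed

lemma theta_cont: "continuous_on {0..T} theta"
  unfolding theta_def[abs_def] by (intro continuous_intros)

lemma g2_int: "(\<lambda>r. (v r)\<^sup>2 * cos (theta r)) integrable_on {0..T}"
  by (rule integrable_continuous_interval) (intro continuous_intros v_cont theta_cont)

lemma e_int: "e integrable_on {0..T}"
  unfolding e_def[abs_def]
  by (intro integrable_add frw_int) (use integrable_on_mult_right[OF g2_int, of "aK / 2"] in \<open>simp add: mult.assoc\<close>)

lemma int_split: "integral {0..T} (\<lambda>r. fr r \<bullet> w1) = integral {0..T} e - (aK / 2) * integral {0..T} (\<lambda>r. (v r)\<^sup>2 * cos (theta r))"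
proof -
  have "integral {0..T} (\<lambda>r. fr r \<bullet> w1) = integral {0..T} (\<lambda>r. e r - (aK / 2) * ((v r)\<^sup>2 * cos (theta r)))"
    by (rule integral_cong) (simp add: e_def)
  also have "\<dots> = integral {0..T} e - integral {0..T} (\<lambda>r. (aK / 2) * ((v r)\<^sup>2 * cos (theta r)))"
    by (rule integral_diff[OF e_int integrable_on_mult_right[OF g2_int]])
  finally show ?thesis by simp
qed

lemma J_lower: "(1 - Lam * T) * Iv2 \<le> integral {0..T} (\<lambda>r. (v r)\<^sup>2 * cos (theta r))"
proof -
  have "(1 - Lam * T) * Iv2 = integral {0..T} (\<lambda>r. (1 - Lam * T) * (v r)\<^sup>2)"
    by (simp add: Iv2_def)
  also have "\<dots> \<le> integral {0..T} (\<lambda>r. (v r)\<^sup>2 * cos (theta r))"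
  proof (rule integral_le[OF integrable_on_mult_right[OF v2_int] g2_int])
    fix r assume r: "r \<in> {0..T}"
    have "\<bar>theta r\<bar> \<le> Lam * T"
    proof -
      have "\<bar>theta r\<bar> = Lam * \<bar>r - T\<bar>" by (simp add: theta_def Lam_def abs_mult)
      also have "\<dots> \<le> Lam * T" using r consts_nonneg by (intro mult_left_mono) auto
      finally show ?thesis .
    qed
    then have "1 - Lam * T \<le> cos (theta r)" using cos_ge_1_minus_abs[of "theta r"] by linarith
    then show "(1 - Lam * T) * (v r)\<^sup>2 \<le> (v r)\<^sup>2 * cos (theta r)"
      by (simp add: mult.commute mult_left_mono)
  qed
  finally show ?thesis .
qed

lemma e_int_bound: "\<bar>integral {0..T} e\<bar> \<le> k3 * \<eta> * Iv2 + k1 * k1 * V1 * V1"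
proof -
  have "norm (integral {0..T} e) \<le> integral {0..T} (\<lambda>r. k3 * \<eta> * (v r)\<^sup>2 + k1 * k1 * V1 * \<bar>v r\<bar>)"
  proof (rule integral_norm_bound_integral[OF e_int])
    show "(\<lambda>r. k3 * \<eta> * (v r)\<^sup>2 + k1 * k1 * V1 * \<bar>v r\<bar>) integrable_on {0..T}"
      by (intro integrable_add integrable_on_mult_right v2_int absv_int) auto
    fix r assume "r \<in> {0..T}"
    then show "norm (e r) \<le> k3 * \<eta> * (v r)\<^sup>2 + k1 * k1 * V1 * \<bar>v r\<bar>" using e_bound by simp
  qed
  also have "\<dots> = k3 * \<eta> * Iv2 + k1 * k1 * V1 * V1"
  proof -
    have "integral {0..T} (\<lambda>r. k3 * \<eta> * (v r)\<^sup>2 + k1 * k1 * V1 * \<bar>v r\<bar>)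
       = integral {0..T} (\<lambda>r. k3 * \<eta> * (v r)\<^sup>2) + integral {0..T} (\<lambda>r. k1 * k1 * V1 * \<bar>v r\<bar>)"
      by (rule integral_add) (auto intro: integrable_on_mult_right v2_int absv_int)
    then show ?thesis by (simp add: Iv2_def V1_def)
  qed
  finally show ?thesis by simp
qed

lemma Q_eq: "Im (herm (X T) (cis (- lam i1 * T) *s cvec (\<phi> K))) = W T \<bullet> what + ap (Ei T - 1) (W T) \<bullet> what"
proof -
  have e1: "Im (herm (X T) (cis (- lam i1 * T) *s cvec (\<phi> K))) = X T \<bullet> what" by (simp add: Im_herm what_def)
  have e2: "X T = W T + ap (Ei T - 1) (W T)" by (simp add: X_W ap_diff_left)
  show ?thesis unfolding e1 by (subst e2) (simp add: inner_add_left)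
qed

lemma q2_bound: "\<bar>ap (Ei T - 1) (W T) \<bullet> what\<bar> \<le> \<bar>v T\<bar> * (nB * (k1 * V1)) + cr * (v T)\<^sup>2"
proof -
  have dec: "ap (Ei T - 1) (W T) = v T *\<^sub>R ap B (X1 T) + (v T *\<^sub>R ap B (W T - X1 T) + ap (Ei T - 1 - v T *\<^sub>R B) (W T))"
    by (simp add: ap_diff_left ap_add_left ap_scaleR_left ap.diff_right algebra_simps)
  have p: "ap B (X1 T) \<bullet> what = 0" unfolding X1_def what_eq by (rule B_perp)
  have "\<bar>ap (Ei T - 1) (W T) \<bullet> what\<bar> = \<bar>(v T *\<^sub>R ap B (W T - X1 T) + ap (Ei T - 1 - v T *\<^sub>R B) (W T)) \<bullet> what\<bar>"
    unfolding dec by (simp add: inner_add_left p)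
  also have "\<dots> \<le> norm (v T *\<^sub>R ap B (W T - X1 T) + ap (Ei T - 1 - v T *\<^sub>R B) (W T)) * norm what"
    by (rule Cauchy_Schwarz_ineq2)
  also have "\<dots> \<le> norm (v T *\<^sub>R ap B (W T - X1 T)) + norm (ap (Ei T - 1 - v T *\<^sub>R B) (W T))"
    using norm_triangle_ineq[of "v T *\<^sub>R ap B (W T - X1 T)" "ap (Ei T - 1 - v T *\<^sub>R B) (W T)"]
    by (simp only: what_norm mult_1_right)
  also have "\<dots> \<le> \<bar>v T\<bar> * (nB * (k1 * V1)) + cr * (v T)\<^sup>2"
  proof (rule add_mono)
    have "norm (ap B (W T - X1 T)) \<le> nB * norm (W T - X1 T)" using ap_norm by (simp add: nB_def)
    also have "\<dots> \<le> nB * (k1 * V1)" using WTX1 consts_nonneg by (simp add: mult_left_mono)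
    finally show "norm (v T *\<^sub>R ap B (W T - X1 T)) \<le> \<bar>v T\<bar> * (nB * (k1 * V1))" by (simp add: mult_left_mono)
    show "norm (ap (Ei T - 1 - v T *\<^sub>R B) (W T)) \<le> cr * (v T)\<^sup>2"
      using ap_norm[of "Ei T - 1 - v T *\<^sub>R B" "W T"] rho_bound W_norm[of T] Tpos by simp
  qed
  finally show ?thesis .
qed

lemma main_ineq:
  "- sgn aK * Im (herm (X T) (cis (- lam i1 * T) *s cvec (\<phi> K)))
     \<ge> (\<bar>aK\<bar> / 2) * (1 - Lam * T) * Iv2 - (k3 * \<eta> * Iv2 + k1 * k1 * V1 * V1)
       - (\<bar>v T\<bar> * (nB * (k1 * V1)) + cr * (v T)\<^sup>2)"
proof -
  define J where "J = integral {0..T} (\<lambda>r. (v r)\<^sup>2 * cos (theta r))"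
  define Ie where "Ie = integral {0..T} e"
  define q2 where "q2 = ap (Ei T - 1) (W T) \<bullet> what"
  have Q: "Im (herm (X T) (cis (- lam i1 * T) *s cvec (\<phi> K))) = Ie - (aK / 2) * J + q2"
    unfolding Q_eq WT_inner YT_w1 int_split by (simp add: J_def Ie_def q2_def)
  have s: "sgn aK * aK = \<bar>aK\<bar>" by (simp add: sgn_mult_self_eq abs_if sgn_if)
  have sb: "\<bar>sgn aK\<bar> \<le> 1" by (simp add: sgn_if)
  have "- sgn aK * (Ie - (aK / 2) * J + q2) = (\<bar>aK\<bar> / 2) * J - sgn aK * (Ie + q2)"
    using s by (simp add: algebra_simps)
  also have "\<dots> \<ge> (\<bar>aK\<bar> / 2) * (1 - Lam * T) * Iv2 - (\<bar>Ie\<bar> + \<bar>q2\<bar>)"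
  proof -
    have "(\<bar>aK\<bar> / 2) * ((1 - Lam * T) * Iv2) \<le> (\<bar>aK\<bar> / 2) * J"
      using J_lower by (intro mult_left_mono) (auto simp: J_def)
    moreover have "sgn aK * (Ie + q2) \<le> \<bar>Ie\<bar> + \<bar>q2\<bar>"
    proof -
      have "sgn aK * (Ie + q2) \<le> \<bar>sgn aK * (Ie + q2)\<bar>" by simp
      also have "\<dots> \<le> 1 * \<bar>Ie + q2\<bar>" unfolding abs_mult by (intro mult_right_mono sb) simp
      also have "\<dots> \<le> \<bar>Ie\<bar> + \<bar>q2\<bar>" by simp
      finally show ?thesis .
    qed
    ultimately show ?thesis by (simp add: mult.assoc)
  qed
  finally have "- sgn aK * Im (herm (X T) (cis (- lam i1 * T) *s cvec (\<phi> K))) \<ge> (\<bar>aK\<bar> / 2) * (1 - Lam * T) * Iv2 - (\<bar>Ie\<bar> + \<bar>q2\<bar>)"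
    unfolding Q .
  moreover have "\<bar>Ie\<bar> \<le> k3 * \<eta> * Iv2 + k1 * k1 * V1 * V1" using e_int_bound by (simp add: Ie_def)
  moreover have "\<bar>q2\<bar> \<le> \<bar>v T\<bar> * (nB * (k1 * V1)) + cr * (v T)\<^sup>2" using q2_bound by (simp add: q2_def)
  ultimately show ?thesis by linarith
qed

lemma final_ineq:
  assumes small_eta: "cr * \<eta> \<le> beta / 2"
  shows "- sgn aK * Im (herm (X T) (cis (- lam i1 * T) *s cvec (\<phi> K)))
     \<ge> ((\<bar>aK\<bar> / 2) * (1 - Lam * T) - k3 * \<eta> - M1 * T) * Iv2 - Cst * D\<^sup>2"
proof -
  have bp: "beta > 0" by (rule beta_pos)
  have D0: "D \<ge> 0" by (simp add: D_def)
  have vb: "\<bar>v T\<bar> * (beta / 2) \<le> D + Lc * V1" using vT_bound[OF small_eta] by (simp add: Lc_def)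
  have DL0: "0 \<le> D + Lc * V1" using D0 V1_nonneg more_nonneg by simp
  have vb2: "\<bar>v T\<bar> \<le> 2 * (D + Lc * V1) / beta" using vb bp by (simp add: field_simps)
  have "(v T)\<^sup>2 = \<bar>v T\<bar>\<^sup>2" by simp
  also have "\<dots> \<le> (2 * (D + Lc * V1) / beta)\<^sup>2" using vb2 by (intro power_mono) auto
  also have "\<dots> = 4 * (D + Lc * V1)\<^sup>2 / beta\<^sup>2" by (simp add: power_divide power2_eq_square algebra_simps)
  also have "\<dots> \<le> 4 * (2 * (D\<^sup>2 + Lc\<^sup>2 * V1\<^sup>2)) / beta\<^sup>2"
  proof -
    have "(D + Lc * V1)\<^sup>2 \<le> 2 * (D\<^sup>2 + Lc\<^sup>2 * V1\<^sup>2)"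
      using sum_squares_ge_zero[of "D - Lc * V1" 0] by (simp add: power2_eq_square algebra_simps)
    then show ?thesis using bp by (simp add: divide_right_mono)
  qed
  finally have vT2: "(v T)\<^sup>2 \<le> 8 * (D\<^sup>2 + Lc\<^sup>2 * V1\<^sup>2) / beta\<^sup>2" by simp
  have amgm: "\<bar>v T\<bar> * (nB * (k1 * V1)) \<le> ((v T)\<^sup>2 + (nB * k1 * V1)\<^sup>2) / 2"
    using sum_squares_ge_zero[of "\<bar>v T\<bar> - nB * k1 * V1" 0] by (simp add: power2_eq_square algebra_simps)
  have cr0: "cr + 1/2 \<ge> 0" using consts_nonneg by simp
  have cst: "(cr + 1/2) * (v T)\<^sup>2 \<le> Cst * (D\<^sup>2 + Lc\<^sup>2 * V1\<^sup>2)"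
  proof -
    have "(cr + 1/2) * (v T)\<^sup>2 \<le> (cr + 1/2) * (8 * (D\<^sup>2 + Lc\<^sup>2 * V1\<^sup>2) / beta\<^sup>2)"
      using vT2 cr0 by (rule mult_left_mono)
    also have "(cr + 1/2) * (8 * (D\<^sup>2 + Lc\<^sup>2 * V1\<^sup>2) / beta\<^sup>2) = Cst * (D\<^sup>2 + Lc\<^sup>2 * V1\<^sup>2)"
      by (simp add: Cst_def algebra_simps add_divide_distrib)
    finally show ?thesis .
  qed
  have loss: "k1 * k1 * V1 * V1 + (\<bar>v T\<bar> * (nB * (k1 * V1)) + cr * (v T)\<^sup>2) \<le> M1 * V1\<^sup>2 + Cst * D\<^sup>2"
    using amgm cst by (simp add: M1_def power2_eq_square algebra_simps)
  have cs: "M1 * V1\<^sup>2 \<le> M1 * T * Iv2" using CS more_nonneg by (simp add: mult.assoc mult_left_mono)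
  have main: "- sgn aK * Im (herm (X T) (cis (- lam i1 * T) *s cvec (\<phi> K)))
     \<ge> (\<bar>aK\<bar> / 2) * (1 - Lam * T) * Iv2 - (k3 * \<eta> * Iv2 + k1 * k1 * V1 * V1)
       - (\<bar>v T\<bar> * (nB * (k1 * V1)) + cr * (v T)\<^sup>2)" by (rule main_ineq)
  have "((\<bar>aK\<bar> / 2) * (1 - Lam * T) - k3 * \<eta> - M1 * T) * Iv2 - Cst * D\<^sup>2
      = (\<bar>aK\<bar> / 2) * (1 - Lam * T) * Iv2 - k3 * \<eta> * Iv2 - M1 * T * Iv2 - Cst * D\<^sup>2"
    by (simp add: algebra_simps)
  then show ?thesis using main loss cs by linarith
qed

end

theorem theorem2p1:
  fixes H0 H1 :: "real^'n^'n"
    and \<phi> :: "'n \<Rightarrow> real^'n"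
    and lam :: "'n \<Rightarrow> real"
    and i1 K :: 'n
  assumes symH0: "transpose H0 = H0"
    and symH1: "transpose H1 = H1"
    and orth: "\<forall>i j. \<phi> i \<bullet> \<phi> j = (if i = j then 1 else 0)"
    and eig: "\<forall>i. H0 *v \<phi> i = lam i *\<^sub>R \<phi> i"
    and hK0: "(H1 *v \<phi> i1) \<bullet> \<phi> K = 0"
    and hK1: "(comm H1 (comm H0 H1) *v \<phi> i1) \<bullet> \<phi> K \<noteq> 0"
  shows "\<exists>C>0. \<forall>a. 0 < a \<and> a < \<bar>(comm H1 (comm H0 H1) *v \<phi> i1) \<bullet> \<phi> K\<bar> / 8 \<longrightarrow>
           (\<exists>Tstar>0. \<forall>T. 0 < T \<and> T < Tstar \<longrightarrow>
             (\<exists>\<eta>>0. \<forall>(u :: real \<Rightarrow> real) X.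
                u absolutely_integrable_on {0..T} \<and>
                (\<forall>t\<in>{0..T}. \<bar>integral {0..t} u\<bar> < \<eta>) \<and>
                is_solution H0 H1 u (cvec (\<phi> i1)) T X \<longrightarrow>
                - sgn ((comm H1 (comm H0 H1) *v \<phi> i1) \<bullet> \<phi> K)
                    * Im (herm (X T) (cis (- lam i1 * T) *s cvec (\<phi> K)))
                  \<ge> a * integral {0..T} (\<lambda>t. (integral {0..t} u)\<^sup>2)
                    - C * (norm (X T - cis (- lam i1 * T) *s cvec (\<phi> i1)))\<^sup>2))"
proof -
  interpret S: setting H0 H1 \<phi> lam i1 K
    by (unfold_locales) (use assms in auto)
  have aK: "(comm H1 (comm H0 H1) *v \<phi> i1) \<bullet> \<phi> K = S.aK" by (simp add: S.aK_def)
  have aK0: "\<bar>S.aK\<bar> > 0" using hK1 aK by simp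
  define C where "C = S.Cst + 1"
  show ?thesis
  proof (rule exI[of _ C], intro conjI allI impI)
    show "C > 0" using S.more_nonneg by (simp add: C_def)
    fix a assume a: "0 < a \<and> a < \<bar>(comm H1 (comm H0 H1) *v \<phi> i1) \<bullet> \<phi> K\<bar> / 8"
    then have a': "0 < a" "a < \<bar>S.aK\<bar> / 8" using aK by auto
    define den where "den = \<bar>S.aK\<bar> / 2 * S.Lam + S.M1 + 1"
    have den: "den \<ge> 1" using S.consts_nonneg S.more_nonneg by (simp add: den_def)
    define Tstar where "Tstar = min 1 (\<bar>S.aK\<bar> / (8 * den))"
    show "\<exists>Tstar>0. \<forall>T. 0 < T \<and> T < Tstar \<longrightarrow>
             (\<exists>\<eta>>0. \<forall>(u :: real \<Rightarrow> real) X.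
                u absolutely_integrable_on {0..T} \<and>
                (\<forall>t\<in>{0..T}. \<bar>integral {0..t} u\<bar> < \<eta>) \<and>
                is_solution H0 H1 u (cvec (\<phi> i1)) T X \<longrightarrow>
                - sgn ((comm H1 (comm H0 H1) *v \<phi> i1) \<bullet> \<phi> K)
                    * Im (herm (X T) (cis (- lam i1 * T) *s cvec (\<phi> K)))
                  \<ge> a * integral {0..T} (\<lambda>t. (integral {0..t} u)\<^sup>2)
                    - C * (norm (X T - cis (- lam i1 * T) *s cvec (\<phi> i1)))\<^sup>2)"
    proof (rule exI[of _ Tstar], intro conjI allI impI)
      show "Tstar > 0" using aK0 den by (simp add: Tstar_def)
      fix T assume T: "0 < T \<and> T < Tstar"
      define \<eta> where "\<eta> = min 1 (min (S.beta / (2 * (S.cr + 1))) (\<bar>S.aK\<bar> / (8 * (S.k3 + 1))))"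
      have bp: "S.beta > 0" by (rule S.beta_pos)
      show "\<exists>\<eta>>0. \<forall>(u :: real \<Rightarrow> real) X.
                u absolutely_integrable_on {0..T} \<and>
                (\<forall>t\<in>{0..T}. \<bar>integral {0..t} u\<bar> < \<eta>) \<and>
                is_solution H0 H1 u (cvec (\<phi> i1)) T X \<longrightarrow>
                - sgn ((comm H1 (comm H0 H1) *v \<phi> i1) \<bullet> \<phi> K)
                    * Im (herm (X T) (cis (- lam i1 * T) *s cvec (\<phi> K)))
                  \<ge> a * integral {0..T} (\<lambda>t. (integral {0..t} u)\<^sup>2)
                    - C * (norm (X T - cis (- lam i1 * T) *s cvec (\<phi> i1)))\<^sup>2"
      proof (rule exI[of _ \<eta>], intro conjI allI impI)
        show "\<eta> > 0" using bp aK0 S.consts_nonneg by (simp add: \<eta>_def)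
        fix u :: "real \<Rightarrow> real" and X
        assume H: "u absolutely_integrable_on {0..T} \<and>
                (\<forall>t\<in>{0..T}. \<bar>integral {0..t} u\<bar> < \<eta>) \<and>
                is_solution H0 H1 u (cvec (\<phi> i1)) T X"
        interpret R: small H0 H1 \<phi> lam i1 K T u X \<eta>
        proof unfold_locales
          show "0 < T" using T by simp
          show "u absolutely_integrable_on {0..T}" using H by simp
          show "is_solution H0 H1 u (cvec (\<phi> i1)) T X" using H by simp
          show "\<eta> \<le> 1" by (simp add: \<eta>_def)
          show "\<forall>t\<in>{0..T}. \<bar>integral {0..t} u\<bar> \<le> \<eta>" using H by (auto intro: less_imp_le)
        qed
        have se: "S.cr * \<eta> \<le> S.beta / 2"
        proof -
          have "S.cr * \<eta> \<le> S.cr * (S.beta / (2 * (S.cr + 1)))"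
            using S.consts_nonneg by (intro mult_left_mono) (auto simp: \<eta>_def)
          also have "\<dots> \<le> S.beta / 2" using S.consts_nonneg bp by (simp add: field_simps)
          finally show ?thesis .
        qed
        have fin: "- sgn S.aK * Im (herm (X T) (cis (- lam i1 * T) *s cvec (\<phi> K)))
           \<ge> ((\<bar>S.aK\<bar> / 2) * (1 - S.Lam * T) - S.k3 * \<eta> - S.M1 * T) * R.Iv2 - S.Cst * R.D\<^sup>2"
          by (rule R.final_ineq[OF se])
        have coef: "a \<le> (\<bar>S.aK\<bar> / 2) * (1 - S.Lam * T) - S.k3 * \<eta> - S.M1 * T"
        proof -
          have T1: "T \<le> \<bar>S.aK\<bar> / (8 * den)" using T by (simp add: Tstar_def)
          have "(\<bar>S.aK\<bar> / 2) * S.Lam * T + S.M1 * T \<le> den * T"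
            using T S.consts_nonneg by (simp add: den_def algebra_simps)
          also have "\<dots> \<le> den * (\<bar>S.aK\<bar> / (8 * den))" using T1 den by (intro mult_left_mono) auto
          also have "\<dots> = \<bar>S.aK\<bar> / 8" using den by simp
          finally have t1: "(\<bar>S.aK\<bar> / 2) * S.Lam * T + S.M1 * T \<le> \<bar>S.aK\<bar> / 8" .
          have "S.k3 * \<eta> \<le> S.k3 * (\<bar>S.aK\<bar> / (8 * (S.k3 + 1)))"
            using S.consts_nonneg by (intro mult_left_mono) (auto simp: \<eta>_def)
          also have "\<dots> \<le> \<bar>S.aK\<bar> / 8" using S.consts_nonneg aK0 by (simp add: field_simps)
          finally have t2: "S.k3 * \<eta> \<le> \<bar>S.aK\<bar> / 8" .
          show ?thesis using t1 t2 a' by (simp add: algebra_simps)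
        qed
        have Iv: "R.Iv2 = integral {0..T} (\<lambda>t. (integral {0..t} u)\<^sup>2)" by (simp add: R.Iv2_def R.v_def)
        have Dq: "R.D = norm (X T - cis (- lam i1 * T) *s cvec (\<phi> i1))" by (simp add: R.D_def R.X1_def R.x0_def)
        have "a * R.Iv2 \<le> ((\<bar>S.aK\<bar> / 2) * (1 - S.Lam * T) - S.k3 * \<eta> - S.M1 * T) * R.Iv2"
          using coef R.Iv2_nonneg by (rule mult_right_mono)
        moreover have "S.Cst * R.D\<^sup>2 \<le> C * R.D\<^sup>2" by (simp add: C_def algebra_simps)
        ultimately have g: "a * R.Iv2 - C * R.D\<^sup>2 \<le> - sgn S.aK * Im (herm (X T) (cis (- lam i1 * T) *s cvec (\<phi> K)))"
          using fin by linarith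
        show "- sgn ((comm H1 (comm H0 H1) *v \<phi> i1) \<bullet> \<phi> K)
                    * Im (herm (X T) (cis (- lam i1 * T) *s cvec (\<phi> K)))
                  \<ge> a * integral {0..T} (\<lambda>t. (integral {0..t} u)\<^sup>2)
                    - C * (norm (X T - cis (- lam i1 * T) *s cvec (\<phi> i1)))\<^sup>2"
          using g unfolding aK Iv Dq by blast
      qed
    qed
  qed
qed

end
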